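(* In the setup below: (i) $G'$ has $p$-rank $d_p G'=s$, and $G'_{[2]}=(G')^p[G',G']$, so $(G')^{p,el}\simeq G'/G'_{[2]}$; (ii) for every $n\geq 1$, $G'_{[n]}$ is normal in $G'$, the quotient $G'_{[n]}/G'_{[n+1]}$ is an elementary abelian $p$-group, and $G'$ acts trivially by conjugation on $G'_{[n]}/G'_{[n+1]}$; (iii) each $G'_{[n]}$ is open in $G'$ and $\bigcap_n G'_{[n]}=\{1\}$.
   Context: $p$ is an odd prime; $GL_m^1=\{A\in GL_m(\mathbb Z_p): A\equiv 1\bmod p\}$. A pro-$p$ group $G$ is uniform if it is finitely generated, powerful, and with $G_1=G$, $G_{n+1}=G_n^p[G,G_n]$, the $p$-power maps $G_n/G_{n+1}\to G_{n+1}/G_{n+2}$ are isomorphisms. Let $G\subset GL_m^1$ be a closed uniform subgroup, fix $k\geq1$ and $g_1,\dots,g_s\in G_k$ whose images in $G_k/G_{k+1}$ are $\mathbb F_p$-linearly independent, let $G'$ be the closed subgroup generated by the $g_i$, and put $G'_{[n]}=G'\cap G_{n+k-1}$. For a pro-$p$ group $H$, $d_pH=\dim_{\mathbb F_p}H/H^p[H,H]$ and $H^{p,el}=H/H^p[H,H]$. *)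

theory Defs
  imports "HOL-Algebra.Algebra"
begin

text \<open>p-adic m x m matrices are encoded as compatible families of integer matrices
 modulo p^n (inverse limit of M_m(Z/p^n Z)).  A n i j is the (i,j) entry reduced mod p^n,
 represented in [0, p^n); entries outside the index range m x m are 0.\<close>

type_synonym pmat = "nat \<Rightarrow> nat \<Rightarrow> nat \<Rightarrow> int"

definition padic_mat :: "nat \<Rightarrow> nat \<Rightarrow> pmat \<Rightarrow> bool" where
  "padic_mat p m A \<longleftrightarrow>
     (\<forall>n i j. (m \<le> i \<or> m \<le> j) \<longrightarrow> A n i j = 0) \<and>
     (\<forall>n i j. 0 \<le> A n i j \<and> A n i j < int p ^ n) \<and>
     (\<forall>n i j. A n i j = A (Suc n) i j mod int p ^ n)"

definition pmat_one :: "nat \<Rightarrow> nat \<Rightarrow> pmat" where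
  "pmat_one p m = (\<lambda>n i j. if i = j \<and> i < m then 1 mod (int p ^ n) else 0)"

definition pmat_mult :: "nat \<Rightarrow> nat \<Rightarrow> pmat \<Rightarrow> pmat \<Rightarrow> pmat" where
  "pmat_mult p m A B = (\<lambda>n i j. if i < m \<and> j < m
       then (\<Sum>l<m. A n i l * B n l j) mod int p ^ n else 0)"

text \<open>GL_m^1 = matrices over Z_p congruent to 1 mod p (automatically invertible).\<close>
definition GL1 :: "nat \<Rightarrow> nat \<Rightarrow> pmat monoid" where
  "GL1 p m = \<lparr>carrier = {A. padic_mat p m A \<and> A 1 = pmat_one p m 1},
              monoid.mult = pmat_mult p m, one = pmat_one p m\<rparr>"

text \<open>Topological closure in the profinite (inverse limit) topology: basic neighbourhoods
 of A are {B. B N = A N}.\<close>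
definition pclosure :: "nat \<Rightarrow> nat \<Rightarrow> pmat set \<Rightarrow> pmat set" where
  "pclosure p m S = {A \<in> carrier (GL1 p m). \<forall>N. \<exists>B\<in>S. B N = A N}"

definition pclosed :: "nat \<Rightarrow> nat \<Rightarrow> pmat set \<Rightarrow> bool" where
  "pclosed p m S \<longleftrightarrow> S \<subseteq> carrier (GL1 p m) \<and> pclosure p m S \<subseteq> S"

definition popen_in :: "nat \<Rightarrow> nat \<Rightarrow> pmat set \<Rightarrow> pmat set \<Rightarrow> bool" where
  "popen_in p m Y V \<longleftrightarrow> V \<subseteq> Y \<and> (\<forall>A\<in>V. \<exists>N. \<forall>B\<in>Y. B N = A N \<longrightarrow> B \<in> V)"

definition closed_subgroup :: "nat \<Rightarrow> nat \<Rightarrow> pmat set \<Rightarrow> bool" where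
  "closed_subgroup p m H \<longleftrightarrow> subgroup H (GL1 p m) \<and> pclosed p m H"

definition topgen :: "nat \<Rightarrow> nat \<Rightarrow> pmat set \<Rightarrow> pmat set" where
  "topgen p m S = \<Inter>{H. closed_subgroup p m H \<and> S \<subseteq> H}"

definition gcomm :: "('a, 'b) monoid_scheme \<Rightarrow> 'a \<Rightarrow> 'a \<Rightarrow> 'a" where
  "gcomm G x y = inv\<^bsub>G\<^esub> x \<otimes>\<^bsub>G\<^esub> inv\<^bsub>G\<^esub> y \<otimes>\<^bsub>G\<^esub> x \<otimes>\<^bsub>G\<^esub> y"

definition pstep :: "nat \<Rightarrow> nat \<Rightarrow> pmat set \<Rightarrow> pmat set \<Rightarrow> pmat set" where
  "pstep p m G H = topgen p m ({x [^]\<^bsub>GL1 p m\<^esub> p | x. x \<in> H} \<union>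
                               {gcomm (GL1 p m) x y | x y. x \<in> G \<and> y \<in> H})"

text \<open>Lower p-series: pseries G n = G_n for n \<ge> 1 (G_1 = G, G_{n+1} = G_n^p [G,G_n]);
 the value at 0 is an irrelevant convention.\<close>
fun pseries :: "nat \<Rightarrow> nat \<Rightarrow> pmat set \<Rightarrow> nat \<Rightarrow> pmat set" where
  "pseries p m G 0 = G"
| "pseries p m G (Suc 0) = G"
| "pseries p m G (Suc (Suc n)) = pstep p m G (pseries p m G (Suc n))"

definition topfin_gen :: "nat \<Rightarrow> nat \<Rightarrow> pmat set \<Rightarrow> bool" where
  "topfin_gen p m G \<longleftrightarrow> (\<exists>S. finite S \<and> S \<subseteq> G \<and> topgen p m S = G)"

text \<open>Powerful (p odd): [G,G] \<le> closure of G^p.\<close>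
definition powerful :: "nat \<Rightarrow> nat \<Rightarrow> pmat set \<Rightarrow> bool" where
  "powerful p m G \<longleftrightarrow>
     topgen p m {gcomm (GL1 p m) x y | x y. x \<in> G \<and> y \<in> G}
       \<subseteq> topgen p m {x [^]\<^bsub>GL1 p m\<^esub> p | x. x \<in> G}"

text \<open>Uniform: finitely generated, powerful, and x G_{n+1} \<mapsto> x^p G_{n+2} is a well-defined
 isomorphism G_n/G_{n+1} \<rightarrow> G_{n+1}/G_{n+2} for all n \<ge> 1.\<close>
definition uniform :: "nat \<Rightarrow> nat \<Rightarrow> pmat set \<Rightarrow> bool" where
  "uniform p m G \<longleftrightarrow> closed_subgroup p m G \<and> topfin_gen p m G \<and> powerful p m G \<and>
     (\<forall>n\<ge>1. let \<Gamma> = GL1 p m; A = pseries p m G n; B = pseries p m G (n+1);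
                 C = pseries p m G (n+2) in
        (\<forall>x\<in>A. x [^]\<^bsub>\<Gamma>\<^esub> p \<in> B) \<and>
        (\<forall>x\<in>A. \<forall>y\<in>A. x \<otimes>\<^bsub>\<Gamma>\<^esub> inv\<^bsub>\<Gamma>\<^esub> y \<in> B \<longrightarrow>
             x [^]\<^bsub>\<Gamma>\<^esub> p \<otimes>\<^bsub>\<Gamma>\<^esub> inv\<^bsub>\<Gamma>\<^esub> (y [^]\<^bsub>\<Gamma>\<^esub> p) \<in> C) \<and>
        (\<forall>x\<in>A. \<forall>y\<in>A. (x \<otimes>\<^bsub>\<Gamma>\<^esub> y) [^]\<^bsub>\<Gamma>\<^esub> p \<otimes>\<^bsub>\<Gamma>\<^esub>
             inv\<^bsub>\<Gamma>\<^esub> (x [^]\<^bsub>\<Gamma>\<^esub> p \<otimes>\<^bsub>\<Gamma>\<^esub> y [^]\<^bsub>\<Gamma>\<^esub> p) \<in> C) \<and>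
        (\<forall>x\<in>A. x [^]\<^bsub>\<Gamma>\<^esub> p \<in> C \<longrightarrow> x \<in> B) \<and>
        (\<forall>y\<in>B. \<exists>x\<in>A. y \<otimes>\<^bsub>\<Gamma>\<^esub> inv\<^bsub>\<Gamma>\<^esub> (x [^]\<^bsub>\<Gamma>\<^esub> p) \<in> C))"

text \<open>p-rank d_p H = dim_{F_p} H/H^p[H,H], computed as log_p of the order of this
 elementary abelian quotient.\<close>
definition d_p :: "nat \<Rightarrow> nat \<Rightarrow> pmat set \<Rightarrow> nat" where
  "d_p p m H = (THE d. card {pstep p m H H #>\<^bsub>GL1 p m\<^esub> a | a. a \<in> H} = p ^ d)"

text \<open>The images of g_0..g_{s-1} in G_k/G_{k+1} are F_p-linearly independent.\<close>
definition lin_indep_mod :: "nat \<Rightarrow> nat \<Rightarrow> pmat set \<Rightarrow> nat \<Rightarrow> (nat \<Rightarrow> pmat) \<Rightarrow> nat \<Rightarrow> bool" where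
  "lin_indep_mod p m G k g s \<longleftrightarrow>
     (\<forall>c::nat \<Rightarrow> nat. (\<forall>i<s. c i < p) \<longrightarrow>
        foldr (\<lambda>i acc. g i [^]\<^bsub>GL1 p m\<^esub> c i \<otimes>\<^bsub>GL1 p m\<^esub> acc) [0..<s] \<one>\<^bsub>GL1 p m\<^esub>
          \<in> pseries p m G (k+1) \<longrightarrow> (\<forall>i<s. c i = 0))"

end

theory Submission
  imports Defs
begin


definition mm :: "nat \<Rightarrow> (nat\<Rightarrow>nat\<Rightarrow>int) \<Rightarrow> (nat\<Rightarrow>nat\<Rightarrow>int) \<Rightarrow> nat\<Rightarrow>nat\<Rightarrow>int" where
  "mm m A B = (\<lambda>i j. \<Sum>l<m. A i l * B l j)"

definition idm :: "nat\<Rightarrow>nat\<Rightarrow>int" where "idm = (\<lambda>i j. if i = j then 1 else 0)"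

definition meq :: "nat \<Rightarrow> int \<Rightarrow> (nat\<Rightarrow>nat\<Rightarrow>int) \<Rightarrow> (nat\<Rightarrow>nat\<Rightarrow>int) \<Rightarrow> bool" where
  "meq m q A B \<longleftrightarrow> (\<forall>i<m. \<forall>j<m. A i j mod q = B i j mod q)"

lemma meq_refl[simp]: "meq m q A A" by (simp add: meq_def)
lemma meq_sym: "meq m q A B \<Longrightarrow> meq m q B A" by (simp add: meq_def)
lemma meq_trans: "meq m q A B \<Longrightarrow> meq m q B C \<Longrightarrow> meq m q A C" by (simp add: meq_def)
lemma meq_dvd: "d dvd q \<Longrightarrow> meq m q A B \<Longrightarrow> meq m d A B"
  unfolding meq_def by (metis mod_mod_cancel)
lemma meq_exact: "(\<And>i j. i<m \<Longrightarrow> j<m \<Longrightarrow> A i j = B i j) \<Longrightarrow> meq m q A B"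
  by (simp add: meq_def)

lemma mm_assoc: "mm m (mm m A B) C i j = mm m A (mm m B C) i j"
proof -
  have "mm m (mm m A B) C i j = (\<Sum>l<m. \<Sum>k<m. A i k * B k l * C l j)"
    by (simp add: mm_def sum_distrib_right)
  also have "\<dots> = (\<Sum>k<m. \<Sum>l<m. A i k * B k l * C l j)" by (rule sum.swap)
  also have "\<dots> = mm m A (mm m B C) i j"
    by (simp add: mm_def sum_distrib_left mult.assoc)
  finally show ?thesis .
qed

lemma mm_cong: assumes "meq m q A A'" "meq m q B B'" shows "meq m q (mm m A B) (mm m A' B')"
  unfolding meq_def
proof (intro allI impI)
  fix i j assume ij: "i<m" "j<m"
  have "mm m A B i j mod q = (\<Sum>l<m. (A i l * B l j) mod q) mod q"
    by (simp add: mm_def mod_sum_eq)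
  also have "\<dots> = (\<Sum>l<m. (A' i l * B' l j) mod q) mod q"
  proof (rule arg_cong[where f="\<lambda>x. x mod q"], rule sum.cong)
    fix l assume "l \<in> {..<m}"
    then have "A i l mod q = A' i l mod q" "B l j mod q = B' l j mod q"
      using assms ij by (auto simp: meq_def)
    then show "(A i l * B l j) mod q = (A' i l * B' l j) mod q"
      by (metis mod_mult_eq)
  qed simp
  also have "\<dots> = mm m A' B' i j mod q" by (simp add: mm_def mod_sum_eq)
  finally show "mm m A B i j mod q = mm m A' B' i j mod q" .
qed

lemma sum_idm_l: "i < m \<Longrightarrow> (\<Sum>l<m. idm i l * V l) = V i"
proof -
  assume i: "i<m"
  have "(\<Sum>l<m. idm i l * V l) = (\<Sum>l<m. if i = l then V i else 0)"
    by (rule sum.cong) (auto simp: idm_def)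
  also have "\<dots> = V i" using i by (simp add: sum.delta)
  finally show ?thesis .
qed

lemma sum_idm_r: "j < m \<Longrightarrow> (\<Sum>l<m. V l * idm l j) = V j"
proof -
  assume j: "j<m"
  have "(\<Sum>l<m. V l * idm l j) = (\<Sum>l<m. if l = j then V j else 0)"
    by (rule sum.cong) (auto simp: idm_def)
  also have "\<dots> = V j" using j by (simp add: sum.delta')
  finally show ?thesis .
qed

lemma mm_idm_l: "i<m \<Longrightarrow> mm m idm B i j = B i j"
  by (simp add: mm_def sum_idm_l)
lemma mm_idm_r: "j<m \<Longrightarrow> mm m A idm i j = A i j"
  by (simp add: mm_def sum_idm_r)

lemma mm_expand:
  fixes a b :: int and U V :: "nat\<Rightarrow>nat\<Rightarrow>int"
  assumes "i<m" "j<m"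
  shows "mm m (\<lambda>i j. idm i j + a * U i j) (\<lambda>i j. idm i j + b * V i j) i j
       = idm i j + b * V i j + a * U i j + a * b * mm m U V i j"
proof -
  have "mm m (\<lambda>i j. idm i j + a * U i j) (\<lambda>i j. idm i j + b * V i j) i j
     = (\<Sum>l<m. idm i l * idm l j) + b * (\<Sum>l<m. idm i l * V l j) + a * (\<Sum>l<m. U i l * idm l j)
       + a * b * (\<Sum>l<m. U i l * V l j)"
    by (simp add: mm_def sum.distrib sum_distrib_left algebra_simps)
  also have "\<dots> = idm i j + b * V i j + a * U i j + a * b * mm m U V i j"
    using assms by (simp add: sum_idm_l sum_idm_r mm_def)
  finally show ?thesis .
qed

fun mpow :: "nat \<Rightarrow> (nat\<Rightarrow>nat\<Rightarrow>int) \<Rightarrow> nat \<Rightarrow> nat\<Rightarrow>nat\<Rightarrow>int" where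
  "mpow m M 0 = idm"
| "mpow m M (Suc n) = mm m (mpow m M n) M"

lemma mpow_cong: "meq m q M M' \<Longrightarrow> meq m q (mpow m M n) (mpow m M' n)"
  by (induction n) (auto intro: mm_cong)

lemma mpow_expand:
  assumes "\<And>i j. i<m \<Longrightarrow> j<m \<Longrightarrow> M i j = idm i j + q * U i j"
  shows "meq m (q*q) (mpow m M n) (\<lambda>i j. idm i j + (int n * q) * U i j)"
proof (induction n)
  case 0 then show ?case by (simp add: meq_def)
next
  case (Suc n)
  have "meq m (q*q) (mpow m M (Suc n)) (mm m (\<lambda>i j. idm i j + (int n * q) * U i j) (\<lambda>i j. idm i j + q * U i j))"
    using Suc by (simp, intro mm_cong) (auto simp: meq_def assms)
  moreover have "meq m (q*q) (mm m (\<lambda>i j. idm i j + (int n * q) * U i j) (\<lambda>i j. idm i j + q * U i j))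
      (\<lambda>i j. idm i j + (int (Suc n) * q) * U i j)"
    unfolding meq_def
  proof (intro allI impI)
    fix i j assume ij: "i<m" "j<m"
    have "mm m (\<lambda>i j. idm i j + (int n * q) * U i j) (\<lambda>i j. idm i j + q * U i j) i j
       = idm i j + (int (Suc n) * q) * U i j + (q*q) * (int n * mm m U U i j)"
      unfolding mm_expand[OF ij] by (simp add: algebra_simps)
    then show "mm m (\<lambda>i j. idm i j + (int n * q) * U i j) (\<lambda>i j. idm i j + q * U i j) i j mod (q*q)
       = (idm i j + (int (Suc n) * q) * U i j) mod (q*q)" by simp
  qed
  ultimately show ?case by (rule meq_trans)
qed

lemma mpow_p:
  fixes p :: nat
  assumes j: "j \<ge> 1" and M: "meq m (int p ^ j) M idm"
  shows "meq m (int p ^ (j+1)) (mpow m M p) idm"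
proof -
  let ?q = "int p ^ j"
  define U where "U = (\<lambda>i l. (M i l - idm i l) div ?q)"
  have dec: "M i l = idm i l + ?q * U i l" if "i<m" "l<m" for i l
  proof -
    have "M i l mod ?q = idm i l mod ?q" using M that by (simp add: meq_def)
    then have "?q dvd M i l - idm i l" by (simp add: mod_eq_dvd_iff)
    then show ?thesis by (simp add: U_def)
  qed
  have "meq m (?q*?q) (mpow m M p) (\<lambda>i j. idm i j + (int p * ?q) * U i j)"
    by (rule mpow_expand) (simp add: dec)
  moreover have "int p ^ (j+1) dvd ?q * ?q"
  proof -
    have "int p ^ (j+1) dvd int p ^ (j + j)" by (rule le_imp_power_dvd) (use j in simp)
    then show ?thesis by (simp add: power_add)
  qed
  ultimately have "meq m (int p ^ (j+1)) (mpow m M p) (\<lambda>i j. idm i j + (int p * ?q) * U i j)"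
    by (rule meq_dvd[rotated])
  moreover have "meq m (int p ^ (j+1)) (\<lambda>i j. idm i j + (int p * ?q) * U i j) idm"
    by (simp add: meq_def power_Suc)
  ultimately show ?thesis by (rule meq_trans)
qed

lemma mm_comm_mod:
  fixes p :: nat
  assumes "meq m (int p) M idm" "meq m (int p ^ j) L idm"
  shows "meq m (int p ^ (j+1)) (mm m M L) (mm m L M)"
proof -
  let ?q = "int p ^ j"
  define U where "U = (\<lambda>i l. (M i l - idm i l) div int p)"
  define V where "V = (\<lambda>i l. (L i l - idm i l) div ?q)"
  have dX: "M i l = idm i l + int p * U i l" if "i<m" "l<m" for i l
  proof -
    have "M i l mod int p = idm i l mod int p" using assms that by (simp add: meq_def)
    then have "int p dvd M i l - idm i l" by (simp add: mod_eq_dvd_iff)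
    then show ?thesis by (simp add: U_def)
  qed
  have dY: "L i l = idm i l + ?q * V i l" if "i<m" "l<m" for i l
  proof -
    have "L i l mod ?q = idm i l mod ?q" using assms that by (simp add: meq_def)
    then have "?q dvd L i l - idm i l" by (simp add: mod_eq_dvd_iff)
    then show ?thesis by (simp add: V_def)
  qed
  have e1: "meq m (int p ^ (j+1)) (mm m M L) (mm m (\<lambda>i j. idm i j + int p * U i j) (\<lambda>i j. idm i j + ?q * V i j))"
    by (intro mm_cong meq_exact) (auto simp: dX dY)
  have e2: "meq m (int p ^ (j+1)) (mm m L M) (mm m (\<lambda>i j. idm i j + ?q * V i j) (\<lambda>i j. idm i j + int p * U i j))"
    by (intro mm_cong meq_exact) (auto simp: dX dY)
  have e3: "meq m (int p ^ (j+1)) (mm m (\<lambda>i j. idm i j + int p * U i j) (\<lambda>i j. idm i j + ?q * V i j))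
      (mm m (\<lambda>i j. idm i j + ?q * V i j) (\<lambda>i j. idm i j + int p * U i j))"
    unfolding meq_def
  proof (intro allI impI)
    fix i j' assume ij: "i<m" "j'<m"
    show "mm m (\<lambda>i j. idm i j + int p * U i j) (\<lambda>i j. idm i j + ?q * V i j) i j' mod int p ^ (j+1) =
          mm m (\<lambda>i j. idm i j + ?q * V i j) (\<lambda>i j. idm i j + int p * U i j) i j' mod int p ^ (j+1)"
    proof -
      let ?R = "idm i j' + int p * U i j' + int p ^ j * V i j'"
      have a: "mm m (\<lambda>i j. idm i j + int p * U i j) (\<lambda>i j. idm i j + ?q * V i j) i j'
          = ?R + int p ^ (j+1) * mm m U V i j'"
        unfolding mm_expand[OF ij] by (simp add: algebra_simps power_Suc)
      have b: "mm m (\<lambda>i j. idm i j + ?q * V i j) (\<lambda>i j. idm i j + int p * U i j) i j'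
          = ?R + int p ^ (j+1) * mm m V U i j'"
        unfolding mm_expand[OF ij] by (simp add: algebra_simps power_Suc)
      show ?thesis unfolding a b by simp
    qed
  qed
  show ?thesis using e1 e3 meq_sym[OF e2] by (blast intro: meq_trans)
qed



definition red :: "nat \<Rightarrow> nat \<Rightarrow> nat \<Rightarrow> (nat\<Rightarrow>nat\<Rightarrow>int) \<Rightarrow> nat\<Rightarrow>nat\<Rightarrow>int" where
 "red p m N M = (\<lambda>i j. if i<m \<and> j<m then M i j mod int p ^ N else 0)"

definition nf :: "nat \<Rightarrow> nat \<Rightarrow> nat \<Rightarrow> (nat\<Rightarrow>nat\<Rightarrow>int) \<Rightarrow> bool" where
 "nf p m N M \<longleftrightarrow> (\<forall>i j. (m \<le> i \<or> m \<le> j \<longrightarrow> M i j = 0) \<and> 0 \<le> M i j \<and> M i j < int p ^ N)"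

locale pctx = fixes p m :: nat assumes p2: "2 \<le> p"
begin

abbreviation "\<Gamma> \<equiv> GL1 p m"

lemma ppos: "0 < int p ^ N" using p2 by simp

lemma padic_facts: assumes "padic_mat p m A"
  shows "m \<le> i \<or> m \<le> j \<Longrightarrow> A n i j = 0" "0 \<le> A n i j" "A n i j < int p ^ n"
    "A n i j = A (Suc n) i j mod int p ^ n"
  using assms unfolding padic_mat_def by blast+

lemma padic_nf: "padic_mat p m A \<Longrightarrow> nf p m N (A N)"
  unfolding nf_def using padic_facts by blast

lemma nf_red: "nf p m N (red p m N M)"
  using ppos[of N] by (auto simp: nf_def red_def)

lemma meq_red: "meq m (int p^N) (red p m N M) M"
  by (simp add: meq_def red_def)

lemma nf_eq: assumes "nf p m N A" "nf p m N B" "meq m (int p ^ N) A B" shows "A = B"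
proof (intro ext)
  fix i j
  show "A i j = B i j"
  proof (cases "i<m \<and> j<m")
    case True
    then have "A i j mod int p ^ N = B i j mod int p ^ N" using assms(3) by (simp add: meq_def)
    moreover have "A i j mod int p ^ N = A i j" "B i j mod int p ^ N = B i j"
      using assms(1,2) by (auto simp: nf_def intro: mod_pos_pos_trivial)
    ultimately show ?thesis by simp
  next
    case False then show ?thesis using assms(1,2) by (auto simp: nf_def)
  qed
qed

lemma mult_lvl: "pmat_mult p m A B N = red p m N (mm m (A N) (B N))"
  by (simp add: pmat_mult_def red_def mm_def)

lemma one_lvl: "pmat_one p m N = red p m N idm"
  by (auto simp: pmat_one_def red_def idm_def fun_eq_iff)

lemma padic_down: assumes "padic_mat p m A" "N \<le> N'" shows "A N i j = A N' i j mod int p ^ N"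
  using assms(2)
proof (induction N' rule: dec_induct)
  case base
  have "0 \<le> A N i j" "A N i j < int p ^ N" using padic_facts[OF assms(1)] by blast+
  then show ?case by (simp add: mod_pos_pos_trivial)
next
  case (step n)
  have h: "A n i j = A (Suc n) i j mod int p ^ n" using assms(1) unfolding padic_mat_def by blast
  have d: "int p ^ N dvd int p ^ n" using step(1) by (simp add: le_imp_power_dvd)
  have "A N i j = A n i j mod int p ^ N" by (rule step.IH)
  also have "\<dots> = (A (Suc n) i j mod int p ^ n) mod int p ^ N" by (simp only: h)
  also have "\<dots> = A (Suc n) i j mod int p ^ N" by (rule mod_mod_cancel[OF d])
  finally show ?case .
qed

lemma meq_down: assumes "padic_mat p m A" "N \<le> N'" shows "meq m (int p^N) (A N) (A N')"
  unfolding meq_def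
proof (intro allI impI)
  fix i j
  have "A N i j = A N' i j mod int p ^ N" by (rule padic_down[OF assms])
  then show "A N i j mod int p ^ N = A N' i j mod int p ^ N" by simp
qed

lemma eq_down: assumes "padic_mat p m A" "padic_mat p m B" "N \<le> N'" "A N' = B N'" shows "A N = B N"
proof (intro ext)
  fix i j
  have "A N i j = A N' i j mod int p ^ N" by (rule padic_down[OF assms(1,3)])
  also have "\<dots> = B N' i j mod int p ^ N" by (simp only: assms(4))
  also have "\<dots> = B N i j" by (rule padic_down[OF assms(2,3), symmetric])
  finally show "A N i j = B N i j" .
qed

lemma carrier_iff: "A \<in> carrier \<Gamma> \<longleftrightarrow> padic_mat p m A \<and> A 1 = pmat_one p m 1"
  by (simp add: GL1_def)

lemma mult_eq [simp]: "A \<otimes>\<^bsub>\<Gamma>\<^esub> B = pmat_mult p m A B" by (simp add: GL1_def)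
lemma one_eq [simp]: "\<one>\<^bsub>\<Gamma>\<^esub> = pmat_one p m" by (simp add: GL1_def)

lemma padic_mult: assumes "padic_mat p m A" "padic_mat p m B" shows "padic_mat p m (pmat_mult p m A B)"
  unfolding padic_mat_def
proof (intro conjI allI impI)
  fix n i j
  show "m \<le> i \<or> m \<le> j \<Longrightarrow> pmat_mult p m A B n i j = 0" by (auto simp: pmat_mult_def)
  show "0 \<le> pmat_mult p m A B n i j" "pmat_mult p m A B n i j < int p ^ n"
    using ppos[of n] by (auto simp: pmat_mult_def)
  show "pmat_mult p m A B n i j = pmat_mult p m A B (Suc n) i j mod int p ^ n"
  proof (cases "i<m \<and> j<m")
    case True
    have "meq m (int p^n) (mm m (A n) (B n)) (mm m (A (Suc n)) (B (Suc n)))"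
      by (intro mm_cong meq_down assms) auto
    then have "mm m (A n) (B n) i j mod int p ^ n = mm m (A (Suc n)) (B (Suc n)) i j mod int p ^ n"
      using True by (simp add: meq_def)
    moreover have "int p ^ n dvd int p ^ Suc n" by simp
    ultimately show ?thesis using True by (simp add: mult_lvl red_def mod_mod_cancel)
  qed (auto simp: pmat_mult_def)
qed

lemma padic_one: "padic_mat p m (pmat_one p m)"
  unfolding padic_mat_def
proof (intro conjI allI impI)
  fix n i j
  show "m \<le> i \<or> m \<le> j \<Longrightarrow> pmat_one p m n i j = 0" by (auto simp: pmat_one_def)
  show "0 \<le> pmat_one p m n i j" "pmat_one p m n i j < int p ^ n"
    using ppos[of n] by (auto simp: pmat_one_def)
  have "(1::int) mod int p ^ n = (1 mod int p ^ Suc n) mod int p ^ n"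
    by (simp add: mod_mod_cancel)
  then show "pmat_one p m n i j = pmat_one p m (Suc n) i j mod int p ^ n"
    by (auto simp: pmat_one_def)
qed

lemma meq_mult: assumes "meq m (int p^N) (A N) M1" "meq m (int p^N) (B N) M2"
  shows "meq m (int p^N) (pmat_mult p m A B N) (mm m M1 M2)"
  unfolding mult_lvl by (rule meq_trans[OF meq_red mm_cong[OF assms]])

lemma meq_one: "meq m (int p^N) (pmat_one p m N) idm"
  unfolding one_lvl by (rule meq_red)

lemma lvl_one_iff: "padic_mat p m A \<Longrightarrow> A N = pmat_one p m N \<longleftrightarrow> meq m (int p^N) (A N) idm"
proof
  assume "padic_mat p m A" "A N = pmat_one p m N"
  then show "meq m (int p^N) (A N) idm" using meq_one by simp
next
  assume a: "padic_mat p m A" "meq m (int p^N) (A N) idm"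
  show "A N = pmat_one p m N"
    by (rule nf_eq[OF padic_nf[OF a(1)]], simp add: one_lvl nf_red)
       (rule meq_trans[OF a(2) meq_sym[OF meq_one]])
qed

lemma mult_closed: assumes "A \<in> carrier \<Gamma>" "B \<in> carrier \<Gamma>" shows "pmat_mult p m A B \<in> carrier \<Gamma>"
proof -
  have pa: "padic_mat p m A" "padic_mat p m B" and a1: "A 1 = pmat_one p m 1" "B 1 = pmat_one p m 1"
    using assms by (auto simp: carrier_iff)
  have "meq m (int p^1) (pmat_mult p m A B 1) (mm m idm idm)"
    by (rule meq_mult) (simp_all only: a1 meq_one)
  moreover have "meq m (int p^1) (mm m idm idm) idm" by (rule meq_exact) (simp add: mm_idm_l)
  ultimately have "meq m (int p^1) (pmat_mult p m A B 1) idm" by (rule meq_trans)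
  then show ?thesis using padic_mult[OF pa] lvl_one_iff[OF padic_mult[OF pa]]
    by (simp add: carrier_iff)
qed

lemma one_closed: "pmat_one p m \<in> carrier \<Gamma>"
  by (simp add: carrier_iff padic_one)

lemma assoc: assumes "A \<in> carrier \<Gamma>" "B \<in> carrier \<Gamma>" "C \<in> carrier \<Gamma>"
  shows "pmat_mult p m (pmat_mult p m A B) C = pmat_mult p m A (pmat_mult p m B C)"
proof (rule ext)
  fix N
  have "meq m (int p^N) (pmat_mult p m (pmat_mult p m A B) C N) (mm m (mm m (A N) (B N)) (C N))"
    by (intro meq_mult) (simp_all add: mult_lvl meq_red)
  moreover have "meq m (int p^N) (pmat_mult p m A (pmat_mult p m B C) N) (mm m (A N) (mm m (B N) (C N)))"
    by (intro meq_mult) (simp_all add: mult_lvl meq_red)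
  moreover have "meq m (int p^N) (mm m (mm m (A N) (B N)) (C N)) (mm m (A N) (mm m (B N) (C N)))"
    by (rule meq_exact) (simp add: mm_assoc)
  ultimately have e: "meq m (int p^N) (pmat_mult p m (pmat_mult p m A B) C N) (pmat_mult p m A (pmat_mult p m B C) N)"
    by (blast intro: meq_trans meq_sym)
  show "pmat_mult p m (pmat_mult p m A B) C N = pmat_mult p m A (pmat_mult p m B C) N"
    by (rule nf_eq[OF _ _ e]) (simp_all only: mult_lvl nf_red)
qed

lemma l_one: assumes "A \<in> carrier \<Gamma>" shows "pmat_mult p m (pmat_one p m) A = A"
proof (rule ext)
  fix N
  have pa: "padic_mat p m A" using assms by (simp add: carrier_iff)
  have "meq m (int p^N) (pmat_mult p m (pmat_one p m) A N) (mm m idm (A N))"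
    by (intro meq_mult meq_one) simp
  moreover have "meq m (int p^N) (mm m idm (A N)) (A N)" by (rule meq_exact) (simp add: mm_idm_l)
  ultimately have e: "meq m (int p^N) (pmat_mult p m (pmat_one p m) A N) (A N)" by (rule meq_trans)
  show "pmat_mult p m (pmat_one p m) A N = A N"
    by (rule nf_eq[OF _ _ e]) (simp_all only: mult_lvl nf_red padic_nf[OF pa])
qed

lemma r_one: assumes "A \<in> carrier \<Gamma>" shows "pmat_mult p m A (pmat_one p m) = A"
proof (rule ext)
  fix N
  have pa: "padic_mat p m A" using assms by (simp add: carrier_iff)
  have "meq m (int p^N) (pmat_mult p m A (pmat_one p m) N) (mm m (A N) idm)"
    by (intro meq_mult meq_one) simp
  moreover have "meq m (int p^N) (mm m (A N) idm) (A N)" by (rule meq_exact) (simp add: mm_idm_r)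
  ultimately have e: "meq m (int p^N) (pmat_mult p m A (pmat_one p m) N) (A N)" by (rule meq_trans)
  show "pmat_mult p m A (pmat_one p m) N = A N"
    by (rule nf_eq[OF _ _ e]) (simp_all only: mult_lvl nf_red padic_nf[OF pa])
qed

lemma monoid_G: "monoid \<Gamma>"
  by (rule monoidI) (auto simp: mult_closed one_closed assoc l_one r_one)

end


context pctx begin

lemma pow_carrier: "A \<in> carrier \<Gamma> \<Longrightarrow> A [^]\<^bsub>\<Gamma>\<^esub> (n::nat) \<in> carrier \<Gamma>"
  by (rule monoid.nat_pow_closed[OF monoid_G])

lemma meq_pow: "meq m (int p^N) ((A [^]\<^bsub>\<Gamma>\<^esub> (n::nat)) N) (mpow m (A N) n)"
proof (induction n)
  case 0 then show ?case by (simp add: meq_one del: one_eq) (simp add: meq_one)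
next
  case (Suc n)
  then show ?case by (simp del: mult_eq) (simp add: meq_mult)
qed

definition Cong :: "nat \<Rightarrow> pmat set" where
  "Cong N = {A \<in> carrier \<Gamma>. A N = pmat_one p m N}"

lemma Cong_iff: "A \<in> carrier \<Gamma> \<Longrightarrow> A \<in> Cong N \<longleftrightarrow> meq m (int p^N) (A N) idm"
  unfolding Cong_def using lvl_one_iff by (auto simp: carrier_iff)

lemma Cong_sub: "Cong N \<subseteq> carrier \<Gamma>" by (auto simp: Cong_def)

lemma Cong_mono: assumes "N \<le> N'" shows "Cong N' \<subseteq> Cong N"
proof
  fix A assume "A \<in> Cong N'"
  then have "A \<in> carrier \<Gamma>" "A N' = pmat_one p m N'" by (auto simp: Cong_def)
  then have "A N = pmat_one p m N"
    using eq_down[OF _ padic_one assms] by (auto simp: carrier_iff)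
  then show "A \<in> Cong N" using \<open>A \<in> carrier \<Gamma>\<close> by (simp add: Cong_def)
qed

lemma Cong_one: "pmat_one p m \<in> Cong N" by (simp add: Cong_def one_closed)

lemma carrier_Cong1: "A \<in> carrier \<Gamma> \<Longrightarrow> A \<in> Cong 1" by (simp add: Cong_def carrier_iff)

lemma Cong_mult: assumes "A \<in> Cong N" "B \<in> Cong N" shows "pmat_mult p m A B \<in> Cong N"
proof -
  have c: "A \<in> carrier \<Gamma>" "B \<in> carrier \<Gamma>" using assms by (auto simp: Cong_def)
  have "meq m (int p^N) (pmat_mult p m A B N) (mm m idm idm)"
    by (rule meq_mult) (use assms c Cong_iff in auto)
  moreover have "meq m (int p^N) (mm m idm idm) idm" by (rule meq_exact) (simp add: mm_idm_l)
  ultimately have "meq m (int p^N) (pmat_mult p m A B N) idm" by (rule meq_trans)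
  then show ?thesis using Cong_iff mult_closed[OF c] by blast
qed

lemma Cong_pow: assumes "A \<in> Cong N" shows "A [^]\<^bsub>\<Gamma>\<^esub> (n::nat) \<in> Cong N"
proof (induction n)
  case 0 then show ?case by (simp add: Cong_one)
next
  case (Suc n) then show ?case by (simp add: Cong_mult assms)
qed

lemma Cong_p: assumes j: "1 \<le> j" and A: "A \<in> Cong j" shows "A [^]\<^bsub>\<Gamma>\<^esub> p \<in> Cong (j+1)"
proof -
  have c: "A \<in> carrier \<Gamma>" using A by (simp add: Cong_def)
  then have pa: "padic_mat p m A" by (simp add: carrier_iff)
  have "meq m (int p^j) (A (j+1)) idm"
    using meq_trans[OF meq_sym[OF meq_down[OF pa, of j "j+1"]]] A c Cong_iff by auto
  then have "meq m (int p^(j+1)) (mpow m (A (j+1)) p) idm" by (rule mpow_p[OF j])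
  then have "meq m (int p^(j+1)) ((A [^]\<^bsub>\<Gamma>\<^esub> p) (j+1)) idm" by (rule meq_trans[OF meq_pow])
  then show ?thesis using Cong_iff pow_carrier[OF c] by blast
qed

lemma Cong_ppow: assumes "A \<in> carrier \<Gamma>" shows "A [^]\<^bsub>\<Gamma>\<^esub> (p^j) \<in> Cong (j+1)"
proof (induction j)
  case 0
  have "A [^]\<^bsub>\<Gamma>\<^esub> (1::nat) = A" using l_one[OF assms] by simp
  then show ?case using carrier_Cong1[OF assms] by simp
next
  case (Suc j)
  have "A [^]\<^bsub>\<Gamma>\<^esub> (p^Suc j) = (A [^]\<^bsub>\<Gamma>\<^esub> (p^j)) [^]\<^bsub>\<Gamma>\<^esub> p"
    using monoid.nat_pow_pow[OF monoid_G assms] by (simp add: mult.commute)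
  then show ?case using Cong_p[OF _ Suc] by simp
qed

lemma Cong_lvl: "A \<in> Cong N \<Longrightarrow> A N = pmat_one p m N" by (simp add: Cong_def)

lemma l_inv_ex: assumes A: "A \<in> carrier \<Gamma>" shows "\<exists>y\<in>carrier \<Gamma>. pmat_mult p m y A = pmat_one p m"
proof -
  define P where "P = (\<lambda>n::nat. A [^]\<^bsub>\<Gamma>\<^esub> (p^n - 1))"
  define y where "y = (\<lambda>n. P n n)"
  have Pc: "P n \<in> carrier \<Gamma>" for n by (simp add: P_def pow_carrier A)
  have Ppad: "padic_mat p m (P n)" for n using Pc by (simp add: carrier_iff)
  have PA: "pmat_mult p m (P n) A = A [^]\<^bsub>\<Gamma>\<^esub> (p^n)" for n
  proof -
    have "p^n \<ge> 1" using p2 by simp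
    then have "p^n = Suc (p^n - 1)" by simp
    then show ?thesis unfolding P_def by (metis nat_pow_Suc mult_eq)
  qed
  have Pstab: "P (Suc n) n = P n n" for n
  proof -
    have e: "p^Suc n - 1 = (p^n - 1) + p^n * (p - 1)"
    proof -
      have "p^n \<ge> 1" using p2 by simp
      moreover have "p^Suc n = p^n * p" by simp
      moreover have "p^n * p = p^n + p^n*(p-1)" using p2 by (simp add: algebra_simps)
      ultimately show ?thesis by simp
    qed
    have "P (Suc n) = pmat_mult p m (P n) ((A [^]\<^bsub>\<Gamma>\<^esub> (p^n)) [^]\<^bsub>\<Gamma>\<^esub> (p-1))"
      unfolding P_def e using monoid.nat_pow_mult[OF monoid_G A] monoid.nat_pow_pow[OF monoid_G A]
      by (metis mult_eq)
    moreover have "(A [^]\<^bsub>\<Gamma>\<^esub> (p^n)) [^]\<^bsub>\<Gamma>\<^esub> (p-1) \<in> Cong n"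
      by (rule Cong_pow, rule subsetD[OF Cong_mono Cong_ppow[OF A]]) simp
    ultimately have "P (Suc n) n = pmat_mult p m (P n) (pmat_one p m) n"
      by (simp add: mult_lvl Cong_lvl)
    then show ?thesis using r_one[OF Pc] by simp
  qed
  have yc: "y \<in> carrier \<Gamma>"
    unfolding carrier_iff padic_mat_def
  proof (intro conjI allI impI)
    fix n i j
    show "m \<le> i \<or> m \<le> j \<Longrightarrow> y n i j = 0" "0 \<le> y n i j" "y n i j < int p ^ n"
      using padic_facts(1-3)[OF Ppad] by (auto simp: y_def)
    show "y n i j = y (Suc n) i j mod int p ^ n"
      unfolding y_def using padic_facts(4)[OF Ppad[of "Suc n"], where n=n and i=i and j=j] Pstab[of n] by simp
  next
    show "y 1 = pmat_one p m 1" using Pc[of 1] by (simp add: y_def carrier_iff)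
  qed
  have "pmat_mult p m y A = pmat_one p m"
  proof (rule ext)
    fix N
    have "pmat_mult p m y A N = pmat_mult p m (P N) A N" by (simp add: mult_lvl y_def)
    also have "\<dots> = pmat_one p m N"
      unfolding PA using Cong_lvl[OF subsetD[OF Cong_mono Cong_ppow[OF A]]] by simp
    finally show "pmat_mult p m y A N = pmat_one p m N" .
  qed
  then show ?thesis using yc by blast
qed

lemma group_G: "group \<Gamma>"
  by (rule groupI) (auto simp: mult_closed one_closed assoc l_one l_inv_ex)

end



sublocale pctx \<subseteq> grp: group "GL1 p m" by (rule group_G)

context pctx begin
declare mult_eq[simp del] one_eq[simp del]

lemma cancel1 [simp]: "x \<in> carrier \<Gamma> \<Longrightarrow> y \<in> carrier \<Gamma> \<Longrightarrow> inv\<^bsub>\<Gamma>\<^esub> x \<otimes>\<^bsub>\<Gamma>\<^esub> (x \<otimes>\<^bsub>\<Gamma>\<^esub> y) = y"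
  by (simp add: grp.m_assoc[symmetric])
lemma cancel2 [simp]: "x \<in> carrier \<Gamma> \<Longrightarrow> y \<in> carrier \<Gamma> \<Longrightarrow> x \<otimes>\<^bsub>\<Gamma>\<^esub> (inv\<^bsub>\<Gamma>\<^esub> x \<otimes>\<^bsub>\<Gamma>\<^esub> y) = y"
  by (simp add: grp.m_assoc[symmetric])

lemma lvl_mult: "x N = x' N \<Longrightarrow> y N = y' N \<Longrightarrow> (x \<otimes>\<^bsub>\<Gamma>\<^esub> y) N = (x' \<otimes>\<^bsub>\<Gamma>\<^esub> y') N"
  by (simp add: mult_eq mult_lvl)

lemma lvl_inv: assumes "x \<in> carrier \<Gamma>" "x' \<in> carrier \<Gamma>" "x N = x' N"
  shows "(inv\<^bsub>\<Gamma>\<^esub> x) N = (inv\<^bsub>\<Gamma>\<^esub> x') N"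
proof -
  have "(inv\<^bsub>\<Gamma>\<^esub> x) N = ((inv\<^bsub>\<Gamma>\<^esub> x \<otimes>\<^bsub>\<Gamma>\<^esub> x') \<otimes>\<^bsub>\<Gamma>\<^esub> inv\<^bsub>\<Gamma>\<^esub> x') N"
    using assms by (simp add: grp.m_assoc)
  also have "\<dots> = ((inv\<^bsub>\<Gamma>\<^esub> x \<otimes>\<^bsub>\<Gamma>\<^esub> x) \<otimes>\<^bsub>\<Gamma>\<^esub> inv\<^bsub>\<Gamma>\<^esub> x') N"
    by (intro lvl_mult refl) (simp add: assms(3))
  also have "\<dots> = (inv\<^bsub>\<Gamma>\<^esub> x') N" using assms by simp
  finally show ?thesis .
qed

lemma lvl_down: "x \<in> carrier \<Gamma> \<Longrightarrow> y \<in> carrier \<Gamma> \<Longrightarrow> N \<le> N' \<Longrightarrow> x N' = y N' \<Longrightarrow> x N = y N"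
  using eq_down carrier_iff by blast

lemma pclosed_preimage:
  assumes f: "\<And>x. x \<in> carrier \<Gamma> \<Longrightarrow> f x \<in> carrier \<Gamma>"
    and loc: "\<And>x y N. x \<in> carrier \<Gamma> \<Longrightarrow> y \<in> carrier \<Gamma> \<Longrightarrow> x N = y N \<Longrightarrow> f x N = f y N"
    and C: "pclosed p m C"
  shows "pclosed p m {x \<in> carrier \<Gamma>. f x \<in> C}"
  unfolding pclosed_def
proof (intro conjI)
  show "{x \<in> carrier \<Gamma>. f x \<in> C} \<subseteq> carrier \<Gamma>" by blast
  show "pclosure p m {x \<in> carrier \<Gamma>. f x \<in> C} \<subseteq> {x \<in> carrier \<Gamma>. f x \<in> C}"
  proof
  fix A assume "A \<in> pclosure p m {x \<in> carrier \<Gamma>. f x \<in> C}"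
  then have A: "A \<in> carrier \<Gamma>" and h: "\<forall>N. \<exists>B\<in>{x \<in> carrier \<Gamma>. f x \<in> C}. B N = A N"
    by (auto simp: pclosure_def)
  have "f A \<in> pclosure p m C"
    unfolding pclosure_def
  proof (intro CollectI conjI allI)
    show "f A \<in> carrier \<Gamma>" using f A by blast
    fix N
    obtain B where "B \<in> carrier \<Gamma>" "f B \<in> C" "B N = A N" using h by blast
    then show "\<exists>B\<in>C. B N = f A N" using loc[of B A N] A by metis
  qed
  then show "A \<in> {x \<in> carrier \<Gamma>. f x \<in> C}" using C A by (auto simp: pclosed_def)
  qed
qed

lemma pclosed_Un: assumes "pclosed p m A" "pclosed p m B" shows "pclosed p m (A \<union> B)"
  unfolding pclosed_def
proof (intro conjI)
  show "A \<union> B \<subseteq> carrier \<Gamma>" using assms by (auto simp: pclosed_def)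
  show "pclosure p m (A \<union> B) \<subseteq> A \<union> B"
  proof (rule subsetI)
  fix Z assume Z: "Z \<in> pclosure p m (A \<union> B)"
  then have Xc: "Z \<in> carrier \<Gamma>" and h: "\<And>N. \<exists>Y\<in>A \<union> B. Y N = Z N" by (auto simp: pclosure_def)
  show "Z \<in> A \<union> B"
  proof (cases "\<forall>N. \<exists>Y\<in>A. Y N = Z N")
    case True
    then have "Z \<in> pclosure p m A" using Xc by (simp add: pclosure_def)
    then show ?thesis using assms(1) by (auto simp: pclosed_def)
  next
    case False
    then obtain N0 where N0: "\<And>Y. Y \<in> A \<Longrightarrow> Y N0 \<noteq> Z N0" by blast
    have "\<forall>N. \<exists>Y\<in>B. Y N = Z N"
    proof
      fix N
      obtain Y where Y: "Y \<in> A \<union> B" "Y (max N N0) = Z (max N N0)" using h by blast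
      have Yc: "Y \<in> carrier \<Gamma>" using Y(1) assms by (auto simp: pclosed_def)
      have "Y N0 = Z N0" by (rule lvl_down[OF Yc Xc _ Y(2)]) simp
      then have "Y \<in> B" using Y(1) N0 by blast
      moreover have "Y N = Z N" by (rule lvl_down[OF Yc Xc _ Y(2)]) simp
      ultimately show "\<exists>Y\<in>B. Y N = Z N" by blast
    qed
    then have "Z \<in> pclosure p m B" using Xc by (simp add: pclosure_def)
    then show ?thesis using assms(2) by (auto simp: pclosed_def)
  qed
qed
qed

lemma pclosed_empty: "pclosed p m {}" by (simp add: pclosed_def pclosure_def)

lemma pclosed_UN: assumes "finite I" "\<And>i. i \<in> I \<Longrightarrow> pclosed p m (F i)"
  shows "pclosed p m (\<Union>i\<in>I. F i)"
  using assms by (induction I rule: finite_induct) (auto simp: pclosed_empty intro: pclosed_Un)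

lemma rcos_eq: assumes "H \<subseteq> carrier \<Gamma>" "a \<in> carrier \<Gamma>"
  shows "H #>\<^bsub>\<Gamma>\<^esub> a = {x \<in> carrier \<Gamma>. x \<otimes>\<^bsub>\<Gamma>\<^esub> inv\<^bsub>\<Gamma>\<^esub> a \<in> H}"
proof
  show "H #>\<^bsub>\<Gamma>\<^esub> a \<subseteq> {x \<in> carrier \<Gamma>. x \<otimes>\<^bsub>\<Gamma>\<^esub> inv\<^bsub>\<Gamma>\<^esub> a \<in> H}"
    using assms by (auto simp: r_coset_def grp.m_assoc)
  show "{x \<in> carrier \<Gamma>. x \<otimes>\<^bsub>\<Gamma>\<^esub> inv\<^bsub>\<Gamma>\<^esub> a \<in> H} \<subseteq> H #>\<^bsub>\<Gamma>\<^esub> a"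
  proof
    fix x assume x: "x \<in> {x \<in> carrier \<Gamma>. x \<otimes>\<^bsub>\<Gamma>\<^esub> inv\<^bsub>\<Gamma>\<^esub> a \<in> H}"
    then have "x = (x \<otimes>\<^bsub>\<Gamma>\<^esub> inv\<^bsub>\<Gamma>\<^esub> a) \<otimes>\<^bsub>\<Gamma>\<^esub> a" using assms by (simp add: grp.m_assoc)
    then show "x \<in> H #>\<^bsub>\<Gamma>\<^esub> a" using x unfolding r_coset_def by blast
  qed
qed

lemma pclosed_rcos: assumes "pclosed p m H" "a \<in> carrier \<Gamma>" shows "pclosed p m (H #>\<^bsub>\<Gamma>\<^esub> a)"
proof -
  have Hc: "H \<subseteq> carrier \<Gamma>" using assms by (simp add: pclosed_def)
  show ?thesis unfolding rcos_eq[OF Hc assms(2)]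
    by (rule pclosed_preimage[OF _ _ assms(1)]) (auto simp: assms(2) intro: lvl_mult)
qed

lemma pclosed_notin: assumes "pclosed p m C" "A \<in> carrier \<Gamma>" "A \<notin> C"
  shows "\<exists>N. \<forall>B\<in>C. B N \<noteq> A N"
  using assms by (auto simp: pclosed_def pclosure_def)

lemma cs_carrier: "closed_subgroup p m (carrier \<Gamma>)"
  by (simp add: closed_subgroup_def pclosed_def pclosure_def grp.subgroup_self)

lemma cs_sub: "closed_subgroup p m H \<Longrightarrow> H \<subseteq> carrier \<Gamma>"
  by (simp add: closed_subgroup_def pclosed_def)

lemma cs_subgroup: "closed_subgroup p m H \<Longrightarrow> subgroup H \<Gamma>"
  by (simp add: closed_subgroup_def)

lemma topgen_cs: assumes "S \<subseteq> carrier \<Gamma>" shows "closed_subgroup p m (topgen p m S)"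
proof -
  let ?F = "{H. closed_subgroup p m H \<and> S \<subseteq> H}"
  have ne: "carrier \<Gamma> \<in> ?F" using cs_carrier assms by simp
  have sg: "subgroup (\<Inter>?F) \<Gamma>" by (rule grp.subgroups_Inter) (use ne in \<open>auto simp: closed_subgroup_def\<close>)
  have "pclosure p m (\<Inter>?F) \<subseteq> \<Inter>?F"
  proof
    fix A assume A: "A \<in> pclosure p m (\<Inter>?F)"
    show "A \<in> \<Inter>?F"
    proof
      fix H assume H: "H \<in> ?F"
      have "\<forall>N. \<exists>B\<in>H. B N = A N"
      proof
        fix N
        obtain B where "B \<in> \<Inter>?F" "B N = A N" using A unfolding pclosure_def by blast
        then show "\<exists>B\<in>H. B N = A N" using H by blast
      qed
      then have "A \<in> pclosure p m H" using A by (auto simp: pclosure_def)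
      then show "A \<in> H" using H by (auto simp: closed_subgroup_def pclosed_def)
    qed
  qed
  moreover have "\<Inter>?F \<subseteq> carrier \<Gamma>" using ne by blast
  ultimately show ?thesis using sg by (simp add: topgen_def closed_subgroup_def pclosed_def)
qed

lemma topgen_sup: "S \<subseteq> topgen p m S" by (auto simp: topgen_def)

lemma topgen_min: "closed_subgroup p m H \<Longrightarrow> S \<subseteq> H \<Longrightarrow> topgen p m S \<subseteq> H"
  by (auto simp: topgen_def)

lemma cs_conj: assumes L: "closed_subgroup p m L" and g: "g \<in> carrier \<Gamma>"
  shows "closed_subgroup p m {x \<in> carrier \<Gamma>. g \<otimes>\<^bsub>\<Gamma>\<^esub> x \<otimes>\<^bsub>\<Gamma>\<^esub> inv\<^bsub>\<Gamma>\<^esub> g \<in> L}"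
  unfolding closed_subgroup_def
proof
  have sL: "subgroup L \<Gamma>" using L by (simp add: closed_subgroup_def)
  show "subgroup {x \<in> carrier \<Gamma>. g \<otimes>\<^bsub>\<Gamma>\<^esub> x \<otimes>\<^bsub>\<Gamma>\<^esub> inv\<^bsub>\<Gamma>\<^esub> g \<in> L} \<Gamma>"
  proof (rule grp.subgroupI)
    show "{x \<in> carrier \<Gamma>. g \<otimes>\<^bsub>\<Gamma>\<^esub> x \<otimes>\<^bsub>\<Gamma>\<^esub> inv\<^bsub>\<Gamma>\<^esub> g \<in> L} \<noteq> {}"
      using g subgroup.one_closed[OF sL] by (rule_tac ex_in_conv[THEN iffD1], rule_tac x="\<one>\<^bsub>\<Gamma>\<^esub>" in exI) simp
  next
    fix a assume a: "a \<in> {x \<in> carrier \<Gamma>. g \<otimes>\<^bsub>\<Gamma>\<^esub> x \<otimes>\<^bsub>\<Gamma>\<^esub> inv\<^bsub>\<Gamma>\<^esub> g \<in> L}"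
    have "g \<otimes>\<^bsub>\<Gamma>\<^esub> inv\<^bsub>\<Gamma>\<^esub> a \<otimes>\<^bsub>\<Gamma>\<^esub> inv\<^bsub>\<Gamma>\<^esub> g = inv\<^bsub>\<Gamma>\<^esub> (g \<otimes>\<^bsub>\<Gamma>\<^esub> a \<otimes>\<^bsub>\<Gamma>\<^esub> inv\<^bsub>\<Gamma>\<^esub> g)"
      using a g by (simp add: grp.inv_mult_group grp.m_assoc)
    then show "inv\<^bsub>\<Gamma>\<^esub> a \<in> {x \<in> carrier \<Gamma>. g \<otimes>\<^bsub>\<Gamma>\<^esub> x \<otimes>\<^bsub>\<Gamma>\<^esub> inv\<^bsub>\<Gamma>\<^esub> g \<in> L}"
      using a subgroup.m_inv_closed[OF sL] by auto
  next
    fix a b assume a: "a \<in> {x \<in> carrier \<Gamma>. g \<otimes>\<^bsub>\<Gamma>\<^esub> x \<otimes>\<^bsub>\<Gamma>\<^esub> inv\<^bsub>\<Gamma>\<^esub> g \<in> L}"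
      and b: "b \<in> {x \<in> carrier \<Gamma>. g \<otimes>\<^bsub>\<Gamma>\<^esub> x \<otimes>\<^bsub>\<Gamma>\<^esub> inv\<^bsub>\<Gamma>\<^esub> g \<in> L}"
    have "g \<otimes>\<^bsub>\<Gamma>\<^esub> (a \<otimes>\<^bsub>\<Gamma>\<^esub> b) \<otimes>\<^bsub>\<Gamma>\<^esub> inv\<^bsub>\<Gamma>\<^esub> g
        = (g \<otimes>\<^bsub>\<Gamma>\<^esub> a \<otimes>\<^bsub>\<Gamma>\<^esub> inv\<^bsub>\<Gamma>\<^esub> g) \<otimes>\<^bsub>\<Gamma>\<^esub> (g \<otimes>\<^bsub>\<Gamma>\<^esub> b \<otimes>\<^bsub>\<Gamma>\<^esub> inv\<^bsub>\<Gamma>\<^esub> g)"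
      using a b g by (simp add: grp.m_assoc cancel1)
    then show "a \<otimes>\<^bsub>\<Gamma>\<^esub> b \<in> {x \<in> carrier \<Gamma>. g \<otimes>\<^bsub>\<Gamma>\<^esub> x \<otimes>\<^bsub>\<Gamma>\<^esub> inv\<^bsub>\<Gamma>\<^esub> g \<in> L}"
      using a b subgroup.m_closed[OF sL] by auto
  qed auto
  show "pclosed p m {x \<in> carrier \<Gamma>. g \<otimes>\<^bsub>\<Gamma>\<^esub> x \<otimes>\<^bsub>\<Gamma>\<^esub> inv\<^bsub>\<Gamma>\<^esub> g \<in> L}"
    by (rule pclosed_preimage) (use g L in \<open>auto simp: closed_subgroup_def intro: lvl_mult\<close>)
qed

lemma topgen_normal:
  assumes S: "S \<subseteq> carrier \<Gamma>" and g: "g \<in> carrier \<Gamma>"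
    and h: "\<And>x. x \<in> S \<Longrightarrow> g \<otimes>\<^bsub>\<Gamma>\<^esub> x \<otimes>\<^bsub>\<Gamma>\<^esub> inv\<^bsub>\<Gamma>\<^esub> g \<in> topgen p m S"
    and x: "x \<in> topgen p m S"
  shows "g \<otimes>\<^bsub>\<Gamma>\<^esub> x \<otimes>\<^bsub>\<Gamma>\<^esub> inv\<^bsub>\<Gamma>\<^esub> g \<in> topgen p m S"
proof -
  have "topgen p m S \<subseteq> {x \<in> carrier \<Gamma>. g \<otimes>\<^bsub>\<Gamma>\<^esub> x \<otimes>\<^bsub>\<Gamma>\<^esub> inv\<^bsub>\<Gamma>\<^esub> g \<in> topgen p m S}"
    by (rule topgen_min[OF cs_conj[OF topgen_cs[OF S] g]]) (use S h in auto)
  then show ?thesis using x by blast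
qed

lemma Cong_cs: "closed_subgroup p m (Cong N)"
  unfolding closed_subgroup_def pclosed_def
proof (intro conjI)
  show "Cong N \<subseteq> carrier \<Gamma>" by (rule Cong_sub)
  show "subgroup (Cong N) \<Gamma>"
  proof (rule grp.subgroupI)
    show "Cong N \<subseteq> carrier \<Gamma>" by (rule Cong_sub)
    show "Cong N \<noteq> {}" using Cong_one by blast
    fix a assume a: "a \<in> Cong N"
    have ac: "a \<in> carrier \<Gamma>" using a Cong_sub by blast
    have "(inv\<^bsub>\<Gamma>\<^esub> a) N = (inv\<^bsub>\<Gamma>\<^esub> \<one>\<^bsub>\<Gamma>\<^esub>) N"
      by (rule lvl_inv) (use a ac in \<open>auto simp: Cong_def one_eq one_closed\<close>)
    then show "inv\<^bsub>\<Gamma>\<^esub> a \<in> Cong N" using ac by (simp add: Cong_def one_eq[symmetric])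
  next
    fix a b assume "a \<in> Cong N" "b \<in> Cong N"
    then show "a \<otimes>\<^bsub>\<Gamma>\<^esub> b \<in> Cong N" by (simp add: mult_eq Cong_mult)
  qed
  show "pclosure p m (Cong N) \<subseteq> Cong N"
  proof
    fix x assume x: "x \<in> pclosure p m (Cong N)"
    then obtain B where "B \<in> Cong N" "B N = x N" unfolding pclosure_def by blast
    then show "x \<in> Cong N" using x by (auto simp: pclosure_def Cong_def)
  qed
qed

end


context pctx begin

lemma sub_pow: "subgroup H \<Gamma> \<Longrightarrow> x \<in> H \<Longrightarrow> x [^]\<^bsub>\<Gamma>\<^esub> (n::nat) \<in> H"
  by (induction n) (auto intro: subgroup.m_closed subgroup.one_closed)

lemma conj_mult: "g \<in> carrier \<Gamma> \<Longrightarrow> a \<in> carrier \<Gamma> \<Longrightarrow> b \<in> carrier \<Gamma> \<Longrightarrow>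
   g \<otimes>\<^bsub>\<Gamma>\<^esub> (a \<otimes>\<^bsub>\<Gamma>\<^esub> b) \<otimes>\<^bsub>\<Gamma>\<^esub> inv\<^bsub>\<Gamma>\<^esub> g
   = (g \<otimes>\<^bsub>\<Gamma>\<^esub> a \<otimes>\<^bsub>\<Gamma>\<^esub> inv\<^bsub>\<Gamma>\<^esub> g) \<otimes>\<^bsub>\<Gamma>\<^esub> (g \<otimes>\<^bsub>\<Gamma>\<^esub> b \<otimes>\<^bsub>\<Gamma>\<^esub> inv\<^bsub>\<Gamma>\<^esub> g)"
  by (simp add: grp.m_assoc)

lemma conj_inv: "g \<in> carrier \<Gamma> \<Longrightarrow> a \<in> carrier \<Gamma> \<Longrightarrow>
   g \<otimes>\<^bsub>\<Gamma>\<^esub> inv\<^bsub>\<Gamma>\<^esub> a \<otimes>\<^bsub>\<Gamma>\<^esub> inv\<^bsub>\<Gamma>\<^esub> g = inv\<^bsub>\<Gamma>\<^esub> (g \<otimes>\<^bsub>\<Gamma>\<^esub> a \<otimes>\<^bsub>\<Gamma>\<^esub> inv\<^bsub>\<Gamma>\<^esub> g)"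
  by (simp add: grp.inv_mult_group grp.m_assoc)

lemma conj_pow: "g \<in> carrier \<Gamma> \<Longrightarrow> x \<in> carrier \<Gamma> \<Longrightarrow>
   g \<otimes>\<^bsub>\<Gamma>\<^esub> x [^]\<^bsub>\<Gamma>\<^esub> (n::nat) \<otimes>\<^bsub>\<Gamma>\<^esub> inv\<^bsub>\<Gamma>\<^esub> g = (g \<otimes>\<^bsub>\<Gamma>\<^esub> x \<otimes>\<^bsub>\<Gamma>\<^esub> inv\<^bsub>\<Gamma>\<^esub> g) [^]\<^bsub>\<Gamma>\<^esub> n"
proof (induction n)
  case 0 then show ?case by simp
next
  case (Suc n)
  have "g \<otimes>\<^bsub>\<Gamma>\<^esub> (x [^]\<^bsub>\<Gamma>\<^esub> n \<otimes>\<^bsub>\<Gamma>\<^esub> x) \<otimes>\<^bsub>\<Gamma>\<^esub> inv\<^bsub>\<Gamma>\<^esub> g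
     = (g \<otimes>\<^bsub>\<Gamma>\<^esub> x [^]\<^bsub>\<Gamma>\<^esub> n \<otimes>\<^bsub>\<Gamma>\<^esub> inv\<^bsub>\<Gamma>\<^esub> g) \<otimes>\<^bsub>\<Gamma>\<^esub> (g \<otimes>\<^bsub>\<Gamma>\<^esub> x \<otimes>\<^bsub>\<Gamma>\<^esub> inv\<^bsub>\<Gamma>\<^esub> g)"
    using Suc.prems by (intro conj_mult) auto
  then show ?case using Suc by simp
qed

lemma conj_comm: assumes "g \<in> carrier \<Gamma>" "x \<in> carrier \<Gamma>" "y \<in> carrier \<Gamma>"
  shows "g \<otimes>\<^bsub>\<Gamma>\<^esub> gcomm \<Gamma> x y \<otimes>\<^bsub>\<Gamma>\<^esub> inv\<^bsub>\<Gamma>\<^esub> g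
     = gcomm \<Gamma> (g \<otimes>\<^bsub>\<Gamma>\<^esub> x \<otimes>\<^bsub>\<Gamma>\<^esub> inv\<^bsub>\<Gamma>\<^esub> g) (g \<otimes>\<^bsub>\<Gamma>\<^esub> y \<otimes>\<^bsub>\<Gamma>\<^esub> inv\<^bsub>\<Gamma>\<^esub> g)"
  using assms by (simp add: gcomm_def conj_mult conj_inv[symmetric])

lemma comm_carrier: "x \<in> carrier \<Gamma> \<Longrightarrow> y \<in> carrier \<Gamma> \<Longrightarrow> gcomm \<Gamma> x y \<in> carrier \<Gamma>"
  by (simp add: gcomm_def)

lemma comm_Cong: assumes x: "x \<in> carrier \<Gamma>" and y: "y \<in> Cong j"
  shows "gcomm \<Gamma> x y \<in> Cong (j+1)"
proof -
  have yc: "y \<in> carrier \<Gamma>" using y Cong_sub by blast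
  have px: "padic_mat p m x" and py: "padic_mat p m y" using x yc by (auto simp: carrier_iff)
  have M: "meq m (int p) (x (j+1)) idm"
  proof -
    have "meq m (int p^1) (x 1) idm" using carrier_Cong1[OF x] Cong_iff[OF x] by blast
    moreover have "meq m (int p^1) (x 1) (x (j+1))" by (rule meq_down[OF px]) simp
    ultimately have "meq m (int p^1) (x (j+1)) idm" by (blast intro: meq_sym meq_trans)
    then show ?thesis by simp
  qed
  have L: "meq m (int p^j) (y (j+1)) idm"
    using meq_trans[OF meq_sym[OF meq_down[OF py, of j "j+1"]]] y yc Cong_iff by auto
  have e: "(x \<otimes>\<^bsub>\<Gamma>\<^esub> y) (j+1) = (y \<otimes>\<^bsub>\<Gamma>\<^esub> x) (j+1)"
  proof -
    have "meq m (int p^(j+1)) ((x \<otimes>\<^bsub>\<Gamma>\<^esub> y) (j+1)) (mm m (x (j+1)) (y (j+1)))"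
      unfolding mult_eq by (rule meq_mult) (rule meq_refl)+
    moreover have "meq m (int p^(j+1)) ((y \<otimes>\<^bsub>\<Gamma>\<^esub> x) (j+1)) (mm m (y (j+1)) (x (j+1)))"
      unfolding mult_eq by (rule meq_mult) (rule meq_refl)+
    moreover have "meq m (int p^(j+1)) (mm m (x (j+1)) (y (j+1))) (mm m (y (j+1)) (x (j+1)))"
      by (rule mm_comm_mod[OF M L])
    ultimately have "meq m (int p^(j+1)) ((x \<otimes>\<^bsub>\<Gamma>\<^esub> y) (j+1)) ((y \<otimes>\<^bsub>\<Gamma>\<^esub> x) (j+1))"
      by (blast intro: meq_sym meq_trans)
    then show ?thesis
      by (rule nf_eq[rotated 2]) (simp_all add: mult_eq mult_lvl nf_red)
  qed
  have g: "gcomm \<Gamma> x y = inv\<^bsub>\<Gamma>\<^esub> (y \<otimes>\<^bsub>\<Gamma>\<^esub> x) \<otimes>\<^bsub>\<Gamma>\<^esub> (x \<otimes>\<^bsub>\<Gamma>\<^esub> y)"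
    using x yc by (simp add: gcomm_def grp.inv_mult_group grp.m_assoc)
  have "(gcomm \<Gamma> x y) (j+1) = (inv\<^bsub>\<Gamma>\<^esub> (y \<otimes>\<^bsub>\<Gamma>\<^esub> x) \<otimes>\<^bsub>\<Gamma>\<^esub> (y \<otimes>\<^bsub>\<Gamma>\<^esub> x)) (j+1)"
    unfolding g by (rule lvl_mult) (simp_all only: e)
  also have "\<dots> = pmat_one p m (j+1)" using x yc by (simp add: one_eq)
  finally show ?thesis using comm_carrier[OF x yc] by (simp add: Cong_def)
qed

end

locale gctx = pctx + fixes G assumes G: "closed_subgroup p m G"
begin

abbreviation "Gn \<equiv> pseries p m G"

lemma Gc: "G \<subseteq> carrier \<Gamma>" using G cs_sub by blast

definition Sg :: "pmat set \<Rightarrow> pmat set" where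
  "Sg H = {x [^]\<^bsub>\<Gamma>\<^esub> p | x. x \<in> H} \<union> {gcomm \<Gamma> x y | x y. x \<in> G \<and> y \<in> H}"

lemma pstep_Sg: "pstep p m G H = topgen p m (Sg H)" by (simp add: pstep_def Sg_def)

lemma Sg_carrier: "H \<subseteq> carrier \<Gamma> \<Longrightarrow> Sg H \<subseteq> carrier \<Gamma>"
  using Gc by (auto simp: Sg_def intro!: comm_carrier)

lemma Gn_props_Suc: "closed_subgroup p m (Gn (Suc j)) \<and> Gn (Suc j) \<subseteq> G \<and>
   (\<forall>g\<in>G. \<forall>x\<in>Gn (Suc j). g \<otimes>\<^bsub>\<Gamma>\<^esub> x \<otimes>\<^bsub>\<Gamma>\<^esub> inv\<^bsub>\<Gamma>\<^esub> g \<in> Gn (Suc j))"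
proof (induction j)
  case 0
  have "subgroup G \<Gamma>" using G by (simp add: closed_subgroup_def)
  then show ?case using G by (auto intro: subgroup.m_closed subgroup.m_inv_closed)
next
  case (Suc j)
  let ?H = "Gn (Suc j)"
  have Hc: "?H \<subseteq> carrier \<Gamma>" using Suc Gc by blast
  have sH: "subgroup ?H \<Gamma>" using Suc by (simp add: closed_subgroup_def)
  have S: "Sg ?H \<subseteq> carrier \<Gamma>" by (rule Sg_carrier[OF Hc])
  have eq: "Gn (Suc (Suc j)) = topgen p m (Sg ?H)" by (simp add: pstep_Sg)
  have "Sg ?H \<subseteq> ?H"
  proof
    fix z assume "z \<in> Sg ?H"
    then consider x where "x \<in> ?H" "z = x [^]\<^bsub>\<Gamma>\<^esub> p" | x y where "x \<in> G" "y \<in> ?H" "z = gcomm \<Gamma> x y"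
      unfolding Sg_def by blast
    then show "z \<in> ?H"
    proof cases
      case 1 then show ?thesis using sub_pow[OF sH] by simp
    next
      case 2
      have xc: "x \<in> carrier \<Gamma>" "y \<in> carrier \<Gamma>" using 2 Gc Hc by auto
      have ix: "inv\<^bsub>\<Gamma>\<^esub> x \<in> G" using 2 G by (simp add: closed_subgroup_def subgroup.m_inv_closed)
      have "inv\<^bsub>\<Gamma>\<^esub> x \<otimes>\<^bsub>\<Gamma>\<^esub> inv\<^bsub>\<Gamma>\<^esub> y \<otimes>\<^bsub>\<Gamma>\<^esub> inv\<^bsub>\<Gamma>\<^esub> (inv\<^bsub>\<Gamma>\<^esub> x) \<in> ?H"
        using Suc ix 2 sH by (simp add: subgroup.m_inv_closed)
      then have "(inv\<^bsub>\<Gamma>\<^esub> x \<otimes>\<^bsub>\<Gamma>\<^esub> inv\<^bsub>\<Gamma>\<^esub> y \<otimes>\<^bsub>\<Gamma>\<^esub> x) \<otimes>\<^bsub>\<Gamma>\<^esub> y \<in> ?H"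
        using xc 2 sH by (simp add: subgroup.m_closed)
      then show ?thesis using 2 by (simp add: gcomm_def)
    qed
  qed
  moreover have "closed_subgroup p m ?H" using Suc by blast
  ultimately have sub: "Gn (Suc (Suc j)) \<subseteq> ?H" unfolding eq using topgen_min by blast
  have norm: "\<forall>g\<in>G. \<forall>x\<in>Gn (Suc (Suc j)). g \<otimes>\<^bsub>\<Gamma>\<^esub> x \<otimes>\<^bsub>\<Gamma>\<^esub> inv\<^bsub>\<Gamma>\<^esub> g \<in> Gn (Suc (Suc j))"
  proof (intro ballI)
    fix g x assume g: "g \<in> G" and x: "x \<in> Gn (Suc (Suc j))"
    have gc: "g \<in> carrier \<Gamma>" using g Gc by blast
    show "g \<otimes>\<^bsub>\<Gamma>\<^esub> x \<otimes>\<^bsub>\<Gamma>\<^esub> inv\<^bsub>\<Gamma>\<^esub> g \<in> Gn (Suc (Suc j))"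
      unfolding eq
    proof (rule topgen_normal[OF S gc _ x[unfolded eq]])
      fix z assume "z \<in> Sg ?H"
      then consider x where "x \<in> ?H" "z = x [^]\<^bsub>\<Gamma>\<^esub> p" | x y where "x \<in> G" "y \<in> ?H" "z = gcomm \<Gamma> x y"
        unfolding Sg_def by blast
      then have "g \<otimes>\<^bsub>\<Gamma>\<^esub> z \<otimes>\<^bsub>\<Gamma>\<^esub> inv\<^bsub>\<Gamma>\<^esub> g \<in> Sg ?H"
      proof cases
        case 1
        have "g \<otimes>\<^bsub>\<Gamma>\<^esub> x \<otimes>\<^bsub>\<Gamma>\<^esub> inv\<^bsub>\<Gamma>\<^esub> g \<in> ?H" using Suc g 1 by blast
        then show ?thesis using 1 conj_pow[OF gc, of x p] Hc unfolding Sg_def by auto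
      next
        case 2
        have "g \<otimes>\<^bsub>\<Gamma>\<^esub> y \<otimes>\<^bsub>\<Gamma>\<^esub> inv\<^bsub>\<Gamma>\<^esub> g \<in> ?H" using Suc g 2 by blast
        moreover have "g \<otimes>\<^bsub>\<Gamma>\<^esub> x \<otimes>\<^bsub>\<Gamma>\<^esub> inv\<^bsub>\<Gamma>\<^esub> g \<in> G"
          using G g 2 gc Gc by (auto simp: closed_subgroup_def intro!: subgroup.m_closed subgroup.m_inv_closed)
        ultimately show ?thesis using 2 conj_comm[OF gc, of x y] Hc Gc unfolding Sg_def by blast
      qed
      then show "g \<otimes>\<^bsub>\<Gamma>\<^esub> z \<otimes>\<^bsub>\<Gamma>\<^esub> inv\<^bsub>\<Gamma>\<^esub> g \<in> topgen p m (Sg ?H)" using topgen_sup by blast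
    qed
  qed
  have cs: "closed_subgroup p m (Gn (Suc (Suc j)))" unfolding eq by (rule topgen_cs[OF S])
  have "Gn (Suc (Suc j)) \<subseteq> G" using sub Suc by blast
  then show ?case using cs norm by blast
qed

lemma Gn_cs: "closed_subgroup p m (Gn j)"
  using Gn_props_Suc[of "j - 1"] G by (cases j) auto

lemma Gn_G: "Gn j \<subseteq> G"
  using Gn_props_Suc[of "j - 1"] by (cases j) auto

lemma Gn_carrier: "Gn j \<subseteq> carrier \<Gamma>" using Gn_G Gc by blast

lemma Gn_sub: "subgroup (Gn j) \<Gamma>" using Gn_cs by (simp add: closed_subgroup_def)

lemma Gn_normal: "g \<in> G \<Longrightarrow> x \<in> Gn j \<Longrightarrow> g \<otimes>\<^bsub>\<Gamma>\<^esub> x \<otimes>\<^bsub>\<Gamma>\<^esub> inv\<^bsub>\<Gamma>\<^esub> g \<in> Gn j"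
  using Gn_props_Suc[of "j - 1"] G
  by (cases j) (auto simp: closed_subgroup_def intro!: subgroup.m_closed subgroup.m_inv_closed)

lemma Gn_Suc: "1 \<le> j \<Longrightarrow> Gn (Suc j) = topgen p m (Sg (Gn j))"
  by (cases j) (auto simp: pstep_Sg)

lemma Gn_pow: "1 \<le> j \<Longrightarrow> x \<in> Gn j \<Longrightarrow> x [^]\<^bsub>\<Gamma>\<^esub> p \<in> Gn (j+1)"
  using Gn_Suc[of j] topgen_sup[of "Sg (Gn j)"] by (auto simp: Sg_def)

lemma Gn_comm: assumes "1 \<le> j" "x \<in> G" "y \<in> Gn j" shows "gcomm \<Gamma> x y \<in> Gn (j+1)"
proof -
  have "gcomm \<Gamma> x y \<in> Sg (Gn j)" unfolding Sg_def using assms by blast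
  then show ?thesis using Gn_Suc[OF assms(1)] topgen_sup[of "Sg (Gn j)"] by auto
qed

lemma Gn_dec: "Gn (Suc j) \<subseteq> Gn j"
proof (cases j)
  case 0 then show ?thesis by simp
next
  case (Suc i)
  have "Sg (Gn j) \<subseteq> Gn j"
  proof
    fix z assume "z \<in> Sg (Gn j)"
    then consider x where "x \<in> Gn j" "z = x [^]\<^bsub>\<Gamma>\<^esub> p" | x y where "x \<in> G" "y \<in> Gn j" "z = gcomm \<Gamma> x y"
      unfolding Sg_def by blast
    then show "z \<in> Gn j"
    proof cases
      case 1 then show ?thesis using sub_pow[OF Gn_sub] by simp
    next
      case 2
      have xc: "x \<in> carrier \<Gamma>" "y \<in> carrier \<Gamma>" using 2 Gc Gn_carrier by auto
      have ix: "inv\<^bsub>\<Gamma>\<^esub> x \<in> G" using 2 G by (simp add: closed_subgroup_def subgroup.m_inv_closed)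
      have "inv\<^bsub>\<Gamma>\<^esub> x \<otimes>\<^bsub>\<Gamma>\<^esub> inv\<^bsub>\<Gamma>\<^esub> y \<otimes>\<^bsub>\<Gamma>\<^esub> inv\<^bsub>\<Gamma>\<^esub> (inv\<^bsub>\<Gamma>\<^esub> x) \<in> Gn j"
        using Gn_normal[OF ix] 2 Gn_sub by (simp add: subgroup.m_inv_closed)
      then have "(inv\<^bsub>\<Gamma>\<^esub> x \<otimes>\<^bsub>\<Gamma>\<^esub> inv\<^bsub>\<Gamma>\<^esub> y \<otimes>\<^bsub>\<Gamma>\<^esub> x) \<otimes>\<^bsub>\<Gamma>\<^esub> y \<in> Gn j"
        using xc 2 Gn_sub by (simp add: subgroup.m_closed)
      then show ?thesis using 2 by (simp add: gcomm_def)
    qed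
  qed
  then show ?thesis using Gn_Suc[of j] Suc Gn_cs topgen_min by simp
qed

lemma Gn_anti: "i \<le> j \<Longrightarrow> Gn j \<subseteq> Gn i"
  by (induction j rule: dec_induct) (use Gn_dec in auto)

lemma Gn_Cong: "1 \<le> j \<Longrightarrow> Gn j \<subseteq> Cong j"
proof (induction j rule: dec_induct)
  case base then show ?case using Gc carrier_Cong1 by auto
next
  case (step j)
  have "Sg (Gn j) \<subseteq> Cong (Suc j)"
  proof
    fix z assume "z \<in> Sg (Gn j)"
    then consider x where "x \<in> Gn j" "z = x [^]\<^bsub>\<Gamma>\<^esub> p" | x y where "x \<in> G" "y \<in> Gn j" "z = gcomm \<Gamma> x y"
      unfolding Sg_def by blast
    then show "z \<in> Cong (Suc j)"
    proof cases
      case 1 then show ?thesis using Cong_p[OF step(1)] step by auto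
    next
      case 2 then show ?thesis using comm_Cong[of x y j] step Gc by auto
    qed
  qed
  then show ?case using Gn_Suc[OF step(1)] Cong_cs topgen_min by simp
qed

end


definition fprod :: "('a,'b) monoid_scheme \<Rightarrow> (nat \<Rightarrow> 'a) \<Rightarrow> (nat \<Rightarrow> nat) \<Rightarrow> nat list \<Rightarrow> 'a" where
 "fprod Q y c xs = foldr (\<lambda>i acc. y i [^]\<^bsub>Q\<^esub> c i \<otimes>\<^bsub>Q\<^esub> acc) xs \<one>\<^bsub>Q\<^esub>"

lemma fprod_Nil [simp]: "fprod Q y c [] = \<one>\<^bsub>Q\<^esub>" by (simp add: fprod_def)
lemma fprod_Cons [simp]: "fprod Q y c (a # xs) = y a [^]\<^bsub>Q\<^esub> c a \<otimes>\<^bsub>Q\<^esub> fprod Q y c xs"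
  by (simp add: fprod_def)

lemma fprod_cong: "(\<And>i. i \<in> set xs \<Longrightarrow> c i = d i) \<Longrightarrow> fprod Q y c xs = fprod Q y d xs"
  by (induction xs) auto

lemma (in monoid) fprod_closed: "(\<And>i. i \<in> set xs \<Longrightarrow> y i \<in> carrier G) \<Longrightarrow> fprod G y c xs \<in> carrier G"
  by (induction xs) auto

lemma (in comm_group) fprod_mult: "(\<And>i. i \<in> set xs \<Longrightarrow> y i \<in> carrier G) \<Longrightarrow>
   fprod G y c xs \<otimes> fprod G y d xs = fprod G y (\<lambda>i. c i + d i) xs"
proof (induction xs)
  case Nil then show ?case by simp
next
  case (Cons a xs)
  have ya: "y a \<in> carrier G" using Cons by simp
  have cl: "fprod G y c xs \<in> carrier G" "fprod G y d xs \<in> carrier G"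
    using Cons by (auto intro: fprod_closed)
  have "fprod G y c (a # xs) \<otimes> fprod G y d (a # xs)
      = (y a [^] c a \<otimes> y a [^] d a) \<otimes> (fprod G y c xs \<otimes> fprod G y d xs)"
    using ya cl by (simp add: m_ac)
  also have "\<dots> = y a [^] (c a + d a) \<otimes> fprod G y (\<lambda>i. c i + d i) xs"
    using Cons ya by (simp add: nat_pow_mult)
  finally show ?case by simp
qed

lemma (in group) pow_mod_exp: assumes "y \<in> carrier G" "y [^] q = \<one>"
  shows "y [^] (n mod q) = y [^] (n::nat)"
proof -
  have "y [^] (n mod q) \<otimes> (y [^] q) [^] (n div q) = y [^] (n mod q + q * (n div q))"
    using assms(1) by (simp add: nat_pow_pow nat_pow_mult)
  also have "\<dots> = y [^] n" by (simp only: mod_mult_div_eq)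
  finally have "y [^] (n mod q) \<otimes> (y [^] q) [^] (n div q) = y [^] n" .
  then show ?thesis using assms by simp
qed

lemma (in group) fprod_mod: "(\<And>i. i \<in> set xs \<Longrightarrow> y i \<in> carrier G \<and> y i [^] q = \<one>) \<Longrightarrow>
   fprod G y (\<lambda>i. c i mod q) xs = fprod G y c xs"
  by (induction xs) (auto simp: pow_mod_exp)

lemma (in monoid) fprod_zero: "(\<And>i. i \<in> set xs \<Longrightarrow> c i = 0) \<Longrightarrow> (\<And>i. i \<in> set xs \<Longrightarrow> y i \<in> carrier G) \<Longrightarrow>
   fprod G y c xs = \<one>"
  by (induction xs) auto

lemma (in monoid) fprod_delta: "distinct xs \<Longrightarrow> i \<in> set xs \<Longrightarrow> (\<And>i. i \<in> set xs \<Longrightarrow> y i \<in> carrier G) \<Longrightarrow>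
   fprod G y (\<lambda>j. if j = i then 1 else 0) xs = y i"
proof (induction xs)
  case Nil then show ?case by simp
next
  case (Cons a xs)
  show ?case
  proof (cases "a = i")
    case True
    then have "fprod G y (\<lambda>j. if j = i then 1 else 0) xs = \<one>"
      using Cons by (intro fprod_zero) auto
    then show ?thesis using True Cons by (simp add: l_one[symmetric] nat_pow_def)
  next
    case False
    then show ?thesis using Cons by (simp add: fprod_closed)
  qed
qed

context pctx begin

lemma rcos_K: "H #>\<^bsub>\<Gamma>\<lparr>carrier := K\<rparr>\<^esub> a = H #>\<^bsub>\<Gamma>\<^esub> a" by (simp add: r_coset_def)

lemma quot_normal:
  assumes sK: "subgroup K \<Gamma>" and sH: "subgroup H \<Gamma>" and HK: "H \<subseteq> K"
    and nrm: "\<And>x h. x \<in> K \<Longrightarrow> h \<in> H \<Longrightarrow> x \<otimes>\<^bsub>\<Gamma>\<^esub> h \<otimes>\<^bsub>\<Gamma>\<^esub> inv\<^bsub>\<Gamma>\<^esub> x \<in> H"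
  shows "H \<lhd> \<Gamma>\<lparr>carrier := K\<rparr>"
proof -
  have gK: "group (\<Gamma>\<lparr>carrier := K\<rparr>)" by (rule grp.subgroup_imp_group[OF sK])
  have "subgroup H (\<Gamma>\<lparr>carrier := K\<rparr>)" by (rule grp.subgroup_incl[OF sH sK HK])
  moreover have "\<forall>x\<in>carrier (\<Gamma>\<lparr>carrier := K\<rparr>). \<forall>h\<in>H.
      x \<otimes>\<^bsub>\<Gamma>\<lparr>carrier := K\<rparr>\<^esub> h \<otimes>\<^bsub>\<Gamma>\<lparr>carrier := K\<rparr>\<^esub> inv\<^bsub>\<Gamma>\<lparr>carrier := K\<rparr>\<^esub> x \<in> H"
    using nrm sK by simp
  ultimately show ?thesis using group.normal_inv_iff[OF gK] by blast
qed

lemma quot_comm: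
  assumes sK: "subgroup K \<Gamma>" and sH: "subgroup H \<Gamma>" and HK: "H \<subseteq> K"
    and nrm: "\<And>x h. x \<in> K \<Longrightarrow> h \<in> H \<Longrightarrow> x \<otimes>\<^bsub>\<Gamma>\<^esub> h \<otimes>\<^bsub>\<Gamma>\<^esub> inv\<^bsub>\<Gamma>\<^esub> x \<in> H"
    and cm: "\<And>x y. x \<in> K \<Longrightarrow> y \<in> K \<Longrightarrow> gcomm \<Gamma> x y \<in> H"
  shows "comm_group (\<Gamma>\<lparr>carrier := K\<rparr> Mod H)"
proof -
  interpret N: normal H "\<Gamma>\<lparr>carrier := K\<rparr>" by (rule quot_normal[OF assms(1-4)])
  have Kc: "K \<subseteq> carrier \<Gamma>" using sK subgroup.subset by blast
  show ?thesis
  proof (rule group.group_comm_groupI[OF N.factorgroup_is_group])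
    fix A B assume "A \<in> carrier (\<Gamma>\<lparr>carrier := K\<rparr> Mod H)" "B \<in> carrier (\<Gamma>\<lparr>carrier := K\<rparr> Mod H)"
    then obtain x y where xy: "x \<in> K" "y \<in> K" "A = H #>\<^bsub>\<Gamma>\<lparr>carrier := K\<rparr>\<^esub> x" "B = H #>\<^bsub>\<Gamma>\<lparr>carrier := K\<rparr>\<^esub> y"
      by (auto simp: carrier_FactGroup)
    have xc: "x \<in> carrier \<Gamma>" "y \<in> carrier \<Gamma>" using xy Kc by auto
    have AB: "A \<otimes>\<^bsub>\<Gamma>\<lparr>carrier := K\<rparr> Mod H\<^esub> B = H #>\<^bsub>\<Gamma>\<lparr>carrier := K\<rparr>\<^esub> (x \<otimes>\<^bsub>\<Gamma>\<^esub> y)"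
      using xy N.rcos_sum by simp
    have BA: "B \<otimes>\<^bsub>\<Gamma>\<lparr>carrier := K\<rparr> Mod H\<^esub> A = H #>\<^bsub>\<Gamma>\<lparr>carrier := K\<rparr>\<^esub> (y \<otimes>\<^bsub>\<Gamma>\<^esub> x)"
      using xy N.rcos_sum by simp
    have ix: "inv\<^bsub>\<Gamma>\<^esub> x \<in> K" "inv\<^bsub>\<Gamma>\<^esub> y \<in> K" using xy sK subgroup.m_inv_closed by auto
    have "gcomm \<Gamma> (inv\<^bsub>\<Gamma>\<^esub> x) (inv\<^bsub>\<Gamma>\<^esub> y) \<in> H" by (rule cm[OF ix])
    moreover have "gcomm \<Gamma> (inv\<^bsub>\<Gamma>\<^esub> x) (inv\<^bsub>\<Gamma>\<^esub> y) = (x \<otimes>\<^bsub>\<Gamma>\<^esub> y) \<otimes>\<^bsub>\<Gamma>\<^esub> inv\<^bsub>\<Gamma>\<^esub> (y \<otimes>\<^bsub>\<Gamma>\<^esub> x)"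
      using xc by (simp add: gcomm_def grp.inv_mult_group grp.m_assoc)
    ultimately have "(x \<otimes>\<^bsub>\<Gamma>\<^esub> y) \<in> H #>\<^bsub>\<Gamma>\<^esub> (y \<otimes>\<^bsub>\<Gamma>\<^esub> x)"
      using subgroup.rcos_module_rev[OF sH grp.is_group] xc by simp
    then have "H #>\<^bsub>\<Gamma>\<^esub> (y \<otimes>\<^bsub>\<Gamma>\<^esub> x) = H #>\<^bsub>\<Gamma>\<^esub> (x \<otimes>\<^bsub>\<Gamma>\<^esub> y)"
      using grp.repr_independence[OF _ _ sH] xc by simp
    then show "A \<otimes>\<^bsub>\<Gamma>\<lparr>carrier := K\<rparr> Mod H\<^esub> B = B \<otimes>\<^bsub>\<Gamma>\<lparr>carrier := K\<rparr> Mod H\<^esub> A"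
      unfolding AB BA rcos_K by simp
  qed
qed

lemma quot_pow:
  assumes sK: "subgroup K \<Gamma>" and sH: "subgroup H \<Gamma>" and HK: "H \<subseteq> K"
    and nrm: "\<And>x h. x \<in> K \<Longrightarrow> h \<in> H \<Longrightarrow> x \<otimes>\<^bsub>\<Gamma>\<^esub> h \<otimes>\<^bsub>\<Gamma>\<^esub> inv\<^bsub>\<Gamma>\<^esub> x \<in> H"
    and pw: "\<And>x. x \<in> K \<Longrightarrow> x [^]\<^bsub>\<Gamma>\<^esub> p \<in> H"
    and C: "C \<in> carrier (\<Gamma>\<lparr>carrier := K\<rparr> Mod H)"
  shows "C [^]\<^bsub>\<Gamma>\<lparr>carrier := K\<rparr> Mod H\<^esub> p = \<one>\<^bsub>\<Gamma>\<lparr>carrier := K\<rparr> Mod H\<^esub>"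
proof -
  interpret N: normal H "\<Gamma>\<lparr>carrier := K\<rparr>" by (rule quot_normal[OF assms(1-4)])
  obtain x where x: "x \<in> K" "C = H #>\<^bsub>\<Gamma>\<lparr>carrier := K\<rparr>\<^esub> x" using C by (auto simp: carrier_FactGroup)
  have "C [^]\<^bsub>\<Gamma>\<lparr>carrier := K\<rparr> Mod H\<^esub> p = H #>\<^bsub>\<Gamma>\<lparr>carrier := K\<rparr>\<^esub> (x [^]\<^bsub>\<Gamma>\<lparr>carrier := K\<rparr>\<^esub> p)"
    using N.FactGroup_pow x by simp
  also have "\<dots> = H #>\<^bsub>\<Gamma>\<^esub> (x [^]\<^bsub>\<Gamma>\<^esub> p)"
    by (simp add: rcos_K grp.nat_pow_consistent[symmetric])
  also have "\<dots> = H" using grp.coset_join2[OF _ sH pw[OF x(1)]] x sK subgroup.subset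
    by (metis grp.nat_pow_closed subsetD)
  finally show ?thesis by simp
qed

end

locale dctx = pctx +
  fixes g :: "nat \<Rightarrow> pmat" and s :: nat and K H :: "pmat set"
  assumes gc: "g ` {..<s} \<subseteq> carrier \<Gamma>"
    and K: "K = topgen p m (g ` {..<s})"
    and Hcs: "closed_subgroup p m H" and HK: "H \<subseteq> K"
    and nrm: "\<And>x h. x \<in> K \<Longrightarrow> h \<in> H \<Longrightarrow> x \<otimes>\<^bsub>\<Gamma>\<^esub> h \<otimes>\<^bsub>\<Gamma>\<^esub> inv\<^bsub>\<Gamma>\<^esub> x \<in> H"
    and pw: "\<And>x. x \<in> K \<Longrightarrow> x [^]\<^bsub>\<Gamma>\<^esub> p \<in> H"
    and cm: "\<And>x y. x \<in> K \<Longrightarrow> y \<in> K \<Longrightarrow> gcomm \<Gamma> x y \<in> H"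
begin

abbreviation "K' \<equiv> \<Gamma>\<lparr>carrier := K\<rparr>"
abbreviation "Q \<equiv> K' Mod H"
abbreviation "Y \<equiv> (\<lambda>i. H #>\<^bsub>\<Gamma>\<^esub> g i)"

lemma Kcs: "closed_subgroup p m K" unfolding K by (rule topgen_cs[OF gc])
lemma sK: "subgroup K \<Gamma>" using Kcs by (simp add: closed_subgroup_def)
lemma sH: "subgroup H \<Gamma>" using Hcs by (simp add: closed_subgroup_def)
lemma Kc: "K \<subseteq> carrier \<Gamma>" using sK subgroup.subset by blast
lemma gK: "i < s \<Longrightarrow> g i \<in> K" using topgen_sup[of "g ` {..<s}"] K by auto

lemma QN: "H \<lhd> K'" by (rule quot_normal[OF sK sH HK nrm])
lemma Qc: "comm_group Q" by (rule quot_comm[OF sK sH HK nrm cm])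

interpretation N: normal H K' by (rule QN)
interpretation Q: comm_group Q by (rule Qc)

lemma YQ: "i < s \<Longrightarrow> Y i \<in> carrier Q"
  using gK by (auto simp: carrier_FactGroup rcos_K)

lemma Ypow: "i < s \<Longrightarrow> Y i [^]\<^bsub>Q\<^esub> p = \<one>\<^bsub>Q\<^esub>"
  using quot_pow[OF sK sH HK nrm pw YQ] by simp

lemma hom_fprod: "set xs \<subseteq> {..<s} \<Longrightarrow> fprod \<Gamma> g c xs \<in> K \<and>
    H #>\<^bsub>\<Gamma>\<^esub> fprod \<Gamma> g c xs = fprod Q Y c xs"
proof (induction xs)
  case Nil
  have "H #>\<^bsub>\<Gamma>\<^esub> \<one>\<^bsub>\<Gamma>\<^esub> = H" using grp.coset_join2[OF _ sH] subgroup.one_closed[OF sH] by simp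
  then show ?case using subgroup.one_closed[OF sK] by simp
next
  case (Cons a xs)
  have a: "a < s" using Cons by simp
  have IH: "fprod \<Gamma> g c xs \<in> K" "H #>\<^bsub>\<Gamma>\<^esub> fprod \<Gamma> g c xs = fprod Q Y c xs" using Cons by auto
  have pa: "g a [^]\<^bsub>\<Gamma>\<^esub> c a \<in> K" using sub_pow[OF sK gK[OF a]] .
  have "H #>\<^bsub>\<Gamma>\<^esub> (g a [^]\<^bsub>\<Gamma>\<^esub> c a) = Y a [^]\<^bsub>Q\<^esub> c a"
    using N.FactGroup_pow[of "g a" "c a"] gK[OF a]
    by (simp add: rcos_K grp.nat_pow_consistent[symmetric])
  moreover have "H #>\<^bsub>\<Gamma>\<^esub> (g a [^]\<^bsub>\<Gamma>\<^esub> c a \<otimes>\<^bsub>\<Gamma>\<^esub> fprod \<Gamma> g c xs)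
      = (H #>\<^bsub>\<Gamma>\<^esub> (g a [^]\<^bsub>\<Gamma>\<^esub> c a)) \<otimes>\<^bsub>Q\<^esub> (H #>\<^bsub>\<Gamma>\<^esub> fprod \<Gamma> g c xs)"
    using N.rcos_sum[of "g a [^]\<^bsub>\<Gamma>\<^esub> c a" "fprod \<Gamma> g c xs"] pa IH by (simp add: rcos_K)
  ultimately show ?case using IH pa subgroup.m_closed[OF sK] by simp
qed

definition PE :: "(nat \<Rightarrow> nat) set" where "PE = PiE {..<s} (\<lambda>_. {..<p})"

lemma PE_finite: "finite PE" by (simp add: PE_def finite_PiE)

abbreviation "pc c \<equiv> fprod \<Gamma> g c [0..<s]"
abbreviation "qc c \<equiv> fprod Q Y c [0..<s]"

lemma pcK: "pc c \<in> K" using hom_fprod[of "[0..<s]" c] by (simp add: atLeast0LessThan)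
lemma pcQ: "H #>\<^bsub>\<Gamma>\<^esub> pc c = qc c" using hom_fprod[of "[0..<s]" c] by (simp add: atLeast0LessThan)

lemma Yc: "i \<in> set [0..<s] \<Longrightarrow> Y i \<in> carrier Q" using YQ by simp

lemma qc_mult: "qc c \<otimes>\<^bsub>Q\<^esub> qc d = qc (restrict (\<lambda>i. (c i + d i) mod p) {..<s})"
proof -
  have "qc c \<otimes>\<^bsub>Q\<^esub> qc d = fprod Q Y (\<lambda>i. c i + d i) [0..<s]" by (rule Q.fprod_mult) (use Yc in auto)
  also have "\<dots> = fprod Q Y (\<lambda>i. (c i + d i) mod p) [0..<s]"
    by (rule Q.fprod_mod[symmetric]) (use Yc Ypow in auto)
  also have "\<dots> = qc (restrict (\<lambda>i. (c i + d i) mod p) {..<s})" by (rule fprod_cong) auto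
  finally show ?thesis .
qed

lemma qc_modp: "qc (restrict (\<lambda>i. c i mod p) {..<s}) = qc c"
proof -
  have "qc (restrict (\<lambda>i. c i mod p) {..<s}) = fprod Q Y (\<lambda>i. c i mod p) [0..<s]" by (rule fprod_cong) auto
  also have "\<dots> = qc c" by (rule Q.fprod_mod) (use Yc Ypow in auto)
  finally show ?thesis .
qed

lemma qc_closed: "qc c \<in> carrier Q" by (rule Q.fprod_closed) (use Yc in auto)

lemma restr_PE: "restrict (\<lambda>i. f i mod p) {..<s} \<in> PE"
  using p2 by (auto simp: PE_def)

definition T :: "pmat set" where "T = {x \<in> K. \<exists>c\<in>PE. H #>\<^bsub>\<Gamma>\<^esub> x = qc c}"

lemma phi_mult: "x \<in> K \<Longrightarrow> y \<in> K \<Longrightarrow> H #>\<^bsub>\<Gamma>\<^esub> (x \<otimes>\<^bsub>\<Gamma>\<^esub> y) = (H #>\<^bsub>\<Gamma>\<^esub> x) \<otimes>\<^bsub>Q\<^esub> (H #>\<^bsub>\<Gamma>\<^esub> y)"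
  using N.rcos_sum[of x y] by (simp add: rcos_K)

lemma phiQ: "x \<in> K \<Longrightarrow> H #>\<^bsub>\<Gamma>\<^esub> x \<in> carrier Q"
  unfolding carrier_FactGroup by (rule image_eqI[of _ _ x]) (simp_all add: rcos_K)

lemma phi_one: "H #>\<^bsub>\<Gamma>\<^esub> \<one>\<^bsub>\<Gamma>\<^esub> = \<one>\<^bsub>Q\<^esub>"
proof -
  have "H #>\<^bsub>\<Gamma>\<^esub> \<one>\<^bsub>\<Gamma>\<^esub> = H" by (rule grp.coset_join2[OF grp.one_closed sH subgroup.one_closed[OF sH]])
  then show ?thesis by (simp only: one_FactGroup)
qed

lemma phi_inv: assumes x: "x \<in> K" shows "H #>\<^bsub>\<Gamma>\<^esub> (inv\<^bsub>\<Gamma>\<^esub> x) = inv\<^bsub>Q\<^esub> (H #>\<^bsub>\<Gamma>\<^esub> x)"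
proof -
  have ix: "inv\<^bsub>\<Gamma>\<^esub> x \<in> K" by (rule subgroup.m_inv_closed[OF sK x])
  have xc: "x \<in> carrier \<Gamma>" using x Kc by blast
  have "(H #>\<^bsub>\<Gamma>\<^esub> (inv\<^bsub>\<Gamma>\<^esub> x)) \<otimes>\<^bsub>Q\<^esub> (H #>\<^bsub>\<Gamma>\<^esub> x) = H #>\<^bsub>\<Gamma>\<^esub> (inv\<^bsub>\<Gamma>\<^esub> x \<otimes>\<^bsub>\<Gamma>\<^esub> x)"
    by (rule phi_mult[OF ix x, symmetric])
  also have "\<dots> = H #>\<^bsub>\<Gamma>\<^esub> \<one>\<^bsub>\<Gamma>\<^esub>" by (simp only: grp.l_inv[OF xc])
  also have "\<dots> = \<one>\<^bsub>Q\<^esub>" by (rule phi_one)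
  finally have e: "(H #>\<^bsub>\<Gamma>\<^esub> (inv\<^bsub>\<Gamma>\<^esub> x)) \<otimes>\<^bsub>Q\<^esub> (H #>\<^bsub>\<Gamma>\<^esub> x) = \<one>\<^bsub>Q\<^esub>" .
  show ?thesis by (rule Q.inv_equality[OF e phiQ[OF x] phiQ[OF ix], symmetric])
qed

lemma T_closed: "pclosed p m T"
proof -
  have "T = (\<Union>c\<in>PE. H #>\<^bsub>\<Gamma>\<^esub> pc c)"
  proof
    show "T \<subseteq> (\<Union>c\<in>PE. H #>\<^bsub>\<Gamma>\<^esub> pc c)"
    proof
      fix x assume "x \<in> T"
      then obtain c where c: "x \<in> K" "c \<in> PE" "H #>\<^bsub>\<Gamma>\<^esub> x = qc c" by (auto simp: T_def)
      have "x \<in> H #>\<^bsub>\<Gamma>\<^esub> x" using grp.rcos_self[OF _ sH] c Kc by blast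
      then show "x \<in> (\<Union>c\<in>PE. H #>\<^bsub>\<Gamma>\<^esub> pc c)" using c pcQ by auto
    qed
    show "(\<Union>c\<in>PE. H #>\<^bsub>\<Gamma>\<^esub> pc c) \<subseteq> T"
    proof
      fix x assume "x \<in> (\<Union>c\<in>PE. H #>\<^bsub>\<Gamma>\<^esub> pc c)"
      then obtain c where c: "c \<in> PE" "x \<in> H #>\<^bsub>\<Gamma>\<^esub> pc c" by blast
      have pcc: "pc c \<in> carrier \<Gamma>" using pcK Kc by blast
      have eq: "H #>\<^bsub>\<Gamma>\<^esub> pc c = H #>\<^bsub>\<Gamma>\<^esub> x" by (rule grp.repr_independence[OF c(2) pcc sH])
      obtain h where h: "h \<in> H" "x = h \<otimes>\<^bsub>\<Gamma>\<^esub> pc c" using c(2) unfolding r_coset_def by blast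
      have "x \<in> K" using h HK pcK subgroup.m_closed[OF sK] by auto
      then show "x \<in> T" using c eq pcQ by (auto simp: T_def)
    qed
  qed
  moreover have "pclosed p m (\<Union>c\<in>PE. H #>\<^bsub>\<Gamma>\<^esub> pc c)"
    by (rule pclosed_UN[OF PE_finite]) (use Hcs pcK Kc in \<open>auto simp: closed_subgroup_def intro!: pclosed_rcos\<close>)
  ultimately show ?thesis by simp
qed

lemma qc_zero: "qc (\<lambda>_. 0) = \<one>\<^bsub>Q\<^esub>" by (rule Q.fprod_zero) (use Yc in auto)

lemma T_sub: "subgroup T \<Gamma>"
proof (rule grp.subgroupI)
  show "T \<subseteq> carrier \<Gamma>" using Kc by (auto simp: T_def)
  have "restrict (\<lambda>i. 0 mod p) {..<s} \<in> PE" by (rule restr_PE)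
  moreover have "H #>\<^bsub>\<Gamma>\<^esub> \<one>\<^bsub>\<Gamma>\<^esub> = qc (restrict (\<lambda>i. 0 mod p) {..<s})"
    using qc_modp[of "\<lambda>_. 0"] qc_zero grp.coset_join2[OF _ sH] subgroup.one_closed[OF sH] by simp
  ultimately have "\<one>\<^bsub>\<Gamma>\<^esub> \<in> T" using subgroup.one_closed[OF sK] by (auto simp: T_def)
  then show "T \<noteq> {}" by blast
next
  fix x assume "x \<in> T"
  then obtain c where c: "x \<in> K" "c \<in> PE" "H #>\<^bsub>\<Gamma>\<^esub> x = qc c" by (auto simp: T_def)
  define e where "e = restrict (\<lambda>i. (p - c i) mod p) {..<s}"
  have "qc c \<otimes>\<^bsub>Q\<^esub> qc e = qc (restrict (\<lambda>i. (c i + e i) mod p) {..<s})" by (rule qc_mult)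
  also have "\<dots> = qc (\<lambda>_. 0)"
  proof (rule fprod_cong)
    fix i assume "i \<in> set [0..<s]"
    then have "i < s" by simp
    moreover have "c i < p" using c \<open>i < s\<close> by (auto simp: PE_def)
    ultimately show "restrict (\<lambda>i. (c i + e i) mod p) {..<s} i = 0"
      by (cases "c i = 0") (auto simp: e_def)
  qed
  also have "\<dots> = \<one>\<^bsub>Q\<^esub>" by (rule qc_zero)
  finally have "qc c \<otimes>\<^bsub>Q\<^esub> qc e = \<one>\<^bsub>Q\<^esub>" .
  then have "qc e \<otimes>\<^bsub>Q\<^esub> qc c = \<one>\<^bsub>Q\<^esub>" by (simp only: Q.m_comm[OF qc_closed qc_closed])
  then have "inv\<^bsub>Q\<^esub> (qc c) = qc e" by (rule Q.inv_equality[OF _ qc_closed qc_closed])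
  moreover have "e \<in> PE" unfolding e_def by (rule restr_PE)
  moreover have "inv\<^bsub>\<Gamma>\<^esub> x \<in> K" by (rule subgroup.m_inv_closed[OF sK c(1)])
  ultimately show "inv\<^bsub>\<Gamma>\<^esub> x \<in> T" using phi_inv[OF c(1)] c by (auto simp: T_def)
next
  fix x y assume "x \<in> T" "y \<in> T"
  then obtain c d where c: "x \<in> K" "c \<in> PE" "H #>\<^bsub>\<Gamma>\<^esub> x = qc c" and d: "y \<in> K" "d \<in> PE" "H #>\<^bsub>\<Gamma>\<^esub> y = qc d"
    by (auto simp: T_def)
  have "H #>\<^bsub>\<Gamma>\<^esub> (x \<otimes>\<^bsub>\<Gamma>\<^esub> y) = qc (restrict (\<lambda>i. (c i + d i) mod p) {..<s})"
    using phi_mult[OF c(1) d(1)] c d qc_mult by simp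
  then show "x \<otimes>\<^bsub>\<Gamma>\<^esub> y \<in> T" using restr_PE c d subgroup.m_closed[OF sK] by (auto simp: T_def)
qed

lemma decomp: assumes "x \<in> K" shows "\<exists>c\<in>PE. x \<in> H #>\<^bsub>\<Gamma>\<^esub> pc c"
proof -
  have "g ` {..<s} \<subseteq> T"
  proof
    fix z assume "z \<in> g ` {..<s}"
    then obtain i where i: "i < s" "z = g i" by blast
    define c where "c = restrict (\<lambda>j. (if j = i then 1 else 0) mod p) {..<s}"
    have "c \<in> PE" unfolding c_def by (rule restr_PE)
    moreover have "qc c = Y i"
    proof -
      have "qc c = fprod Q Y (\<lambda>j. if j = i then 1 else 0) [0..<s]"
        unfolding c_def using p2 by (intro fprod_cong) auto
      also have "\<dots> = Y i" by (rule Q.fprod_delta) (use i Yc in auto)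
      finally show ?thesis .
    qed
    ultimately have "\<exists>c\<in>PE. H #>\<^bsub>\<Gamma>\<^esub> g i = qc c" by metis
    then show "z \<in> T" unfolding T_def using i gK[OF i(1)] by blast
  qed
  moreover have "closed_subgroup p m T" using T_sub T_closed by (simp add: closed_subgroup_def)
  ultimately have "topgen p m (g ` {..<s}) \<subseteq> T" by (intro topgen_min)
  then have "K \<subseteq> T" using K by simp
  then obtain c where c: "c \<in> PE" "H #>\<^bsub>\<Gamma>\<^esub> x = qc c" using assms by (auto simp: T_def)
  have "x \<in> H #>\<^bsub>\<Gamma>\<^esub> x" using grp.rcos_self[OF _ sH] assms Kc by blast
  then show ?thesis using c pcQ by auto
qed

lemma inj_aux: assumes c: "c \<in> PE" and d: "d \<in> PE" and eq: "H #>\<^bsub>\<Gamma>\<^esub> pc c = H #>\<^bsub>\<Gamma>\<^esub> pc d"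
  shows "pc (restrict (\<lambda>i. (c i + (p - d i)) mod p) {..<s}) \<in> H"
proof -
  define e where "e = restrict (\<lambda>i. (c i + (p - d i)) mod p) {..<s}"
  have "qc d \<otimes>\<^bsub>Q\<^esub> qc e = qc (restrict (\<lambda>i. (d i + e i) mod p) {..<s})" by (rule qc_mult)
  also have "\<dots> = qc c"
  proof (rule fprod_cong)
    fix i assume "i \<in> set [0..<s]"
    then have i: "i < s" by simp
    have "c i < p" "d i < p" using c d i by (auto simp: PE_def)
    have "(d i + (c i + (p - d i)) mod p) mod p = (d i + (c i + (p - d i))) mod p"
      by (simp add: mod_add_right_eq)
    also have "d i + (c i + (p - d i)) = c i + p" using \<open>d i < p\<close> by simp
    also have "(c i + p) mod p = c i" using \<open>c i < p\<close> by simp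
    finally have "(d i + (c i + (p - d i)) mod p) mod p = c i" .
    then show "restrict (\<lambda>i. (d i + e i) mod p) {..<s} i = c i" using i by (simp add: e_def)
  qed
  also have "\<dots> = qc d" using eq pcQ by simp
  finally have "qc d \<otimes>\<^bsub>Q\<^esub> qc e = qc d" .
  then have "qc e = \<one>\<^bsub>Q\<^esub>" by (rule Q.l_cancel_one[OF qc_closed qc_closed, THEN iffD1])
  then have e1: "H #>\<^bsub>\<Gamma>\<^esub> pc e = H" by (simp only: pcQ one_FactGroup)
  have "pc e \<in> H #>\<^bsub>\<Gamma>\<^esub> pc e" by (rule grp.rcos_self[OF _ sH]) (rule subsetD[OF Kc pcK])
  then have "pc e \<in> H" by (simp only: e1)
  then show ?thesis by (simp add: e_def)
qed

end


declare pseries.simps(3)[simp del]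

locale uctx = gctx + assumes U: "uniform p m G"
begin

lemma Gn1: "Gn 1 = G" by simp

definition findex :: "pmat set \<Rightarrow> pmat set \<Rightarrow> bool" where
  "findex A B \<longleftrightarrow> (\<exists>R. finite R \<and> R \<subseteq> A \<and> A \<subseteq> (\<Union>r\<in>R. B #>\<^bsub>\<Gamma>\<^esub> r))"

lemma Ucond: assumes "1 \<le> j"
  shows "\<And>x y. x \<in> Gn j \<Longrightarrow> y \<in> Gn j \<Longrightarrow> x \<otimes>\<^bsub>\<Gamma>\<^esub> inv\<^bsub>\<Gamma>\<^esub> y \<in> Gn (j+1) \<Longrightarrow>
            x [^]\<^bsub>\<Gamma>\<^esub> p \<otimes>\<^bsub>\<Gamma>\<^esub> inv\<^bsub>\<Gamma>\<^esub> (y [^]\<^bsub>\<Gamma>\<^esub> p) \<in> Gn (j+2)"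
    and "\<And>y. y \<in> Gn (j+1) \<Longrightarrow> \<exists>x\<in>Gn j. y \<otimes>\<^bsub>\<Gamma>\<^esub> inv\<^bsub>\<Gamma>\<^esub> (x [^]\<^bsub>\<Gamma>\<^esub> p) \<in> Gn (j+2)"
proof -
  note u = U[unfolded uniform_def, THEN conjunct2, THEN conjunct2, THEN conjunct2, rule_format, OF assms, unfolded Let_def]
  note u2 = u[THEN conjunct2, THEN conjunct1]
  note u5 = u[THEN conjunct2, THEN conjunct2, THEN conjunct2, THEN conjunct2]
  show "\<And>x y. x \<in> Gn j \<Longrightarrow> y \<in> Gn j \<Longrightarrow> x \<otimes>\<^bsub>\<Gamma>\<^esub> inv\<^bsub>\<Gamma>\<^esub> y \<in> Gn (j+1) \<Longrightarrow>
            x [^]\<^bsub>\<Gamma>\<^esub> p \<otimes>\<^bsub>\<Gamma>\<^esub> inv\<^bsub>\<Gamma>\<^esub> (y [^]\<^bsub>\<Gamma>\<^esub> p) \<in> Gn (j+2)"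
    by (rule u2[rule_format])
  show "\<And>y. y \<in> Gn (j+1) \<Longrightarrow> \<exists>x\<in>Gn j. y \<otimes>\<^bsub>\<Gamma>\<^esub> inv\<^bsub>\<Gamma>\<^esub> (x [^]\<^bsub>\<Gamma>\<^esub> p) \<in> Gn (j+2)"
    by (rule u5[rule_format])
qed

lemma findex_12: "findex (Gn 1) (Gn 2)"
proof -
  have "topfin_gen p m G" by (rule U[unfolded uniform_def, THEN conjunct2, THEN conjunct1])
  then obtain S where S: "finite S" "S \<subseteq> G" "topgen p m S = G" unfolding topfin_gen_def by blast
  from finite_imp_nat_seg_image_inj_on[OF S(1)] obtain n :: nat and f where nf: "S = f ` {i. i < n}"
    by metis
  have Sn: "S = f ` {..<n}" unfolding lessThan_def by (rule nf)
  interpret D: dctx p m f n G "Gn 2"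
  proof
    show "f ` {..<n} \<subseteq> carrier \<Gamma>" using S Sn Gc by auto
    show "G = topgen p m (f ` {..<n})" using S Sn by simp
    show "closed_subgroup p m (Gn 2)" by (rule Gn_cs)
    show "Gn 2 \<subseteq> G" by (rule Gn_G)
    show "\<And>x h. x \<in> G \<Longrightarrow> h \<in> Gn 2 \<Longrightarrow> x \<otimes>\<^bsub>\<Gamma>\<^esub> h \<otimes>\<^bsub>\<Gamma>\<^esub> inv\<^bsub>\<Gamma>\<^esub> x \<in> Gn 2" by (rule Gn_normal)
    show "x [^]\<^bsub>\<Gamma>\<^esub> p \<in> Gn 2" if "x \<in> G" for x
    proof -
      have "x \<in> Gn 1" using that by (simp only: Gn1)
      from Gn_pow[OF le_refl this] show ?thesis by (simp only: one_add_one)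
    qed
    show "gcomm \<Gamma> x y \<in> Gn 2" if "x \<in> G" "y \<in> G" for x y
    proof -
      have "y \<in> Gn 1" using that by (simp only: Gn1)
      from Gn_comm[OF le_refl that(1) this] show ?thesis by (simp only: one_add_one)
    qed
  qed
  have "finite ((\<lambda>c. D.pc c) ` D.PE)" using D.PE_finite by simp
  moreover have "(\<lambda>c. D.pc c) ` D.PE \<subseteq> G" using D.pcK by blast
  moreover have "G \<subseteq> (\<Union>r\<in>(\<lambda>c. D.pc c) ` D.PE. Gn 2 #>\<^bsub>\<Gamma>\<^esub> r)" using D.decomp by blast
  ultimately have "findex G (Gn 2)" unfolding findex_def by blast
  then show ?thesis by (simp only: Gn1)
qed

lemma findex_step: assumes j: "1 \<le> j" and F: "findex (Gn j) (Gn (j+1))"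
  shows "findex (Gn (j+1)) (Gn (j+2))"
proof -
  obtain R where R: "finite R" "R \<subseteq> Gn j" "Gn j \<subseteq> (\<Union>r\<in>R. Gn (j+1) #>\<^bsub>\<Gamma>\<^esub> r)"
    using F by (auto simp: findex_def)
  let ?R = "(\<lambda>r. r [^]\<^bsub>\<Gamma>\<^esub> p) ` R"
  have "finite ?R" using R by simp
  moreover have "?R \<subseteq> Gn (j+1)" using R Gn_pow[OF j] by auto
  moreover have "Gn (j+1) \<subseteq> (\<Union>r\<in>?R. Gn (j+2) #>\<^bsub>\<Gamma>\<^esub> r)"
  proof
    fix y assume y: "y \<in> Gn (j+1)"
    obtain x where x: "x \<in> Gn j" "y \<otimes>\<^bsub>\<Gamma>\<^esub> inv\<^bsub>\<Gamma>\<^esub> (x [^]\<^bsub>\<Gamma>\<^esub> p) \<in> Gn (j+2)"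
      using Ucond(2)[OF j y] by blast
    obtain r where r: "r \<in> R" "x \<in> Gn (j+1) #>\<^bsub>\<Gamma>\<^esub> r" using R x by blast
    have rc: "r \<in> carrier \<Gamma>" "x \<in> carrier \<Gamma>" "y \<in> carrier \<Gamma>" using r R x y Gn_carrier by auto
    have "x \<otimes>\<^bsub>\<Gamma>\<^esub> inv\<^bsub>\<Gamma>\<^esub> r \<in> Gn (j+1)"
      by (rule subgroup.rcos_module_imp[OF Gn_sub grp.is_group rc(1) r(2)])
    then have a: "x [^]\<^bsub>\<Gamma>\<^esub> p \<otimes>\<^bsub>\<Gamma>\<^esub> inv\<^bsub>\<Gamma>\<^esub> (r [^]\<^bsub>\<Gamma>\<^esub> p) \<in> Gn (j+2)"
      using Ucond(1)[OF j x(1)] r R by blast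
    have "y \<otimes>\<^bsub>\<Gamma>\<^esub> inv\<^bsub>\<Gamma>\<^esub> (r [^]\<^bsub>\<Gamma>\<^esub> p)
        = (y \<otimes>\<^bsub>\<Gamma>\<^esub> inv\<^bsub>\<Gamma>\<^esub> (x [^]\<^bsub>\<Gamma>\<^esub> p)) \<otimes>\<^bsub>\<Gamma>\<^esub> (x [^]\<^bsub>\<Gamma>\<^esub> p \<otimes>\<^bsub>\<Gamma>\<^esub> inv\<^bsub>\<Gamma>\<^esub> (r [^]\<^bsub>\<Gamma>\<^esub> p))"
      using rc by (simp add: grp.m_assoc)
    then have "y \<otimes>\<^bsub>\<Gamma>\<^esub> inv\<^bsub>\<Gamma>\<^esub> (r [^]\<^bsub>\<Gamma>\<^esub> p) \<in> Gn (j+2)"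
      using subgroup.m_closed[OF Gn_sub x(2) a] by simp
    then have "y \<in> Gn (j+2) #>\<^bsub>\<Gamma>\<^esub> (r [^]\<^bsub>\<Gamma>\<^esub> p)"
      by (rule subgroup.rcos_module_rev[OF Gn_sub grp.is_group grp.nat_pow_closed[OF rc(1)] rc(3)])
    then show "y \<in> (\<Union>r\<in>?R. Gn (j+2) #>\<^bsub>\<Gamma>\<^esub> r)" using r by blast
  qed
  ultimately show ?thesis unfolding findex_def by blast
qed

lemma findex_succ: "1 \<le> j \<Longrightarrow> findex (Gn j) (Gn (j+1))"
proof (induction j rule: dec_induct)
  case base then show ?case using findex_12 by (simp only: one_add_one)
next
  case (step j) then show ?case using findex_step[of j] by simp
qed

lemma findex_trans: assumes "findex A B" "findex B C" "subgroup C \<Gamma>" "B \<subseteq> A" "subgroup A \<Gamma>"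
  shows "findex A C"
proof -
  obtain R where R: "finite R" "R \<subseteq> A" "A \<subseteq> (\<Union>r\<in>R. B #>\<^bsub>\<Gamma>\<^esub> r)" using assms(1) by (auto simp: findex_def)
  obtain R' where R': "finite R'" "R' \<subseteq> B" "B \<subseteq> (\<Union>r\<in>R'. C #>\<^bsub>\<Gamma>\<^esub> r)" using assms(2) by (auto simp: findex_def)
  have Ac: "A \<subseteq> carrier \<Gamma>" using assms(5) subgroup.subset by blast
  let ?R = "(\<lambda>(a,b). a \<otimes>\<^bsub>\<Gamma>\<^esub> b) ` (R' \<times> R)"
  have "finite ?R" using R R' by simp
  moreover have "?R \<subseteq> A"
  proof
    fix z assume "z \<in> ?R"
    then obtain a b where ab: "a \<in> R'" "b \<in> R" "z = a \<otimes>\<^bsub>\<Gamma>\<^esub> b" by auto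
    have "a \<in> A" "b \<in> A" using ab R R' assms(4) by blast+
    then show "z \<in> A" using ab subgroup.m_closed[OF assms(5)] by simp
  qed
  moreover have "A \<subseteq> (\<Union>r\<in>?R. C #>\<^bsub>\<Gamma>\<^esub> r)"
  proof
    fix x assume x: "x \<in> A"
    obtain r where r: "r \<in> R" "x \<in> B #>\<^bsub>\<Gamma>\<^esub> r" using R x by blast
    obtain h where h: "h \<in> B" "x = h \<otimes>\<^bsub>\<Gamma>\<^esub> r" using r(2) unfolding r_coset_def by blast
    obtain r' where r': "r' \<in> R'" "h \<in> C #>\<^bsub>\<Gamma>\<^esub> r'" using R' h by blast
    obtain h' where h': "h' \<in> C" "h = h' \<otimes>\<^bsub>\<Gamma>\<^esub> r'" using r'(2) unfolding r_coset_def by blast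
    have cc: "h' \<in> carrier \<Gamma>" "r' \<in> carrier \<Gamma>" "r \<in> carrier \<Gamma>"
      using h' r' r R R' assms(3-4) Ac subgroup.subset by blast+
    have "x = h' \<otimes>\<^bsub>\<Gamma>\<^esub> (r' \<otimes>\<^bsub>\<Gamma>\<^esub> r)" using h h' cc by (simp add: grp.m_assoc)
    then have "x \<in> C #>\<^bsub>\<Gamma>\<^esub> (r' \<otimes>\<^bsub>\<Gamma>\<^esub> r)" using h' unfolding r_coset_def by blast
    moreover have "r' \<otimes>\<^bsub>\<Gamma>\<^esub> r \<in> ?R" using r r' by blast
    ultimately show "x \<in> (\<Union>r\<in>?R. C #>\<^bsub>\<Gamma>\<^esub> r)" by blast
  qed
  ultimately show ?thesis unfolding findex_def by blast
qed

lemma findex_G: "1 \<le> j \<Longrightarrow> findex G (Gn j)"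
proof (induction j rule: dec_induct)
  case base
  have sG: "subgroup G \<Gamma>" using G by (simp add: closed_subgroup_def)
  have o: "\<one>\<^bsub>\<Gamma>\<^esub> \<in> G" by (rule subgroup.one_closed[OF sG])
  have "G \<subseteq> G #>\<^bsub>\<Gamma>\<^esub> \<one>\<^bsub>\<Gamma>\<^esub>" using grp.coset_join2[OF grp.one_closed sG o] by simp
  moreover note o
  ultimately show ?case unfolding findex_def by (intro exI[of _ "{\<one>\<^bsub>\<Gamma>\<^esub>}"]) auto
next
  case (step j)
  have "findex G (Gn (j+1))"
    by (rule findex_trans[OF step(3) findex_succ[OF step(1)] Gn_sub])
       (use Gn_dec Gn_G G in \<open>auto simp: closed_subgroup_def\<close>)
  then show ?case by simp
qed

lemma open_Gn: assumes j: "1 \<le> j" and A: "A \<in> Gn j"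
  shows "\<exists>N. \<forall>B\<in>G. B N = A N \<longrightarrow> B \<in> Gn j"
proof -
  obtain R where R: "finite R" "R \<subseteq> G" "G \<subseteq> (\<Union>r\<in>R. Gn j #>\<^bsub>\<Gamma>\<^esub> r)"
    using findex_G[OF j] by (auto simp: findex_def)
  have Ac: "A \<in> carrier \<Gamma>" using A Gn_carrier by blast
  let ?R0 = "{r \<in> R. A \<notin> Gn j #>\<^bsub>\<Gamma>\<^esub> r}"
  have "\<forall>r\<in>?R0. \<exists>N. \<forall>B\<in>Gn j #>\<^bsub>\<Gamma>\<^esub> r. B N \<noteq> A N"
  proof
    fix r assume r: "r \<in> ?R0"
    have "pclosed p m (Gn j #>\<^bsub>\<Gamma>\<^esub> r)"
      by (rule pclosed_rcos) (use Gn_cs r R Gc in \<open>auto simp: closed_subgroup_def\<close>)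
    then show "\<exists>N. \<forall>B\<in>Gn j #>\<^bsub>\<Gamma>\<^esub> r. B N \<noteq> A N" using pclosed_notin Ac r by blast
  qed
  from bchoice[OF this] obtain Nf where Nf0: "\<forall>r\<in>?R0. \<forall>B\<in>Gn j #>\<^bsub>\<Gamma>\<^esub> r. B (Nf r) \<noteq> A (Nf r)" ..
  have Nf: "\<And>r B. r \<in> ?R0 \<Longrightarrow> B \<in> Gn j #>\<^bsub>\<Gamma>\<^esub> r \<Longrightarrow> B (Nf r) \<noteq> A (Nf r)"
    using Nf0 by blast
  define N where "N = Max (insert 0 (Nf ` ?R0))"
  have fin: "finite (insert 0 (Nf ` ?R0))" using R by simp
  have NN: "r \<in> ?R0 \<Longrightarrow> Nf r \<le> N" for r unfolding N_def using fin by (intro Max_ge) auto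
  have "\<forall>B\<in>G. B N = A N \<longrightarrow> B \<in> Gn j"
  proof (intro ballI impI)
    fix B assume B: "B \<in> G" "B N = A N"
    have Bc: "B \<in> carrier \<Gamma>" using B Gc by blast
    obtain r where r: "r \<in> R" "B \<in> Gn j #>\<^bsub>\<Gamma>\<^esub> r" using R B by blast
    have rc: "r \<in> carrier \<Gamma>" using r R Gc by blast
    have "r \<notin> ?R0"
    proof
      assume r0: "r \<in> ?R0"
      have "B (Nf r) = A (Nf r)" by (rule lvl_down[OF Bc Ac NN[OF r0] B(2)])
      then show False using Nf[OF r0 r(2)] by simp
    qed
    then have "A \<in> Gn j #>\<^bsub>\<Gamma>\<^esub> r" using r by blast
    then have e1: "Gn j #>\<^bsub>\<Gamma>\<^esub> r = Gn j #>\<^bsub>\<Gamma>\<^esub> A" by (rule grp.repr_independence[OF _ rc Gn_sub])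
    have "Gn j #>\<^bsub>\<Gamma>\<^esub> A = Gn j" by (rule grp.coset_join2[OF Ac Gn_sub A])
    then show "B \<in> Gn j" using r e1 by simp
  qed
  then show ?thesis by blast
qed

lemma Gn_Cong_inter: "(\<And>N. 1 \<le> N \<Longrightarrow> A \<in> Gn N) \<Longrightarrow> A = \<one>\<^bsub>\<Gamma>\<^esub>"
proof -
  assume h: "\<And>N. 1 \<le> N \<Longrightarrow> A \<in> Gn N"
  have "A N = pmat_one p m N" for N
  proof -
    have "A \<in> Cong (N+1)" using h[of "N+1"] Gn_Cong[of "N+1"] by auto
    then have "A \<in> Cong N" using Cong_mono[of N "N+1"] by auto
    then show ?thesis by (simp add: Cong_def)
  qed
  then show "A = \<one>\<^bsub>\<Gamma>\<^esub>" by (simp add: fun_eq_iff one_eq)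
qed

end


lemma (in pctx) sub_comm: "subgroup H \<Gamma> \<Longrightarrow> x \<in> H \<Longrightarrow> y \<in> H \<Longrightarrow> gcomm \<Gamma> x y \<in> H"
  unfolding gcomm_def by (intro subgroup.m_closed subgroup.m_inv_closed) auto

lemma (in pctx) sub_conj: "subgroup H \<Gamma> \<Longrightarrow> x \<in> H \<Longrightarrow> y \<in> H \<Longrightarrow> x \<otimes>\<^bsub>\<Gamma>\<^esub> y \<otimes>\<^bsub>\<Gamma>\<^esub> inv\<^bsub>\<Gamma>\<^esub> x \<in> H"
  by (intro subgroup.m_closed subgroup.m_inv_closed) auto

locale mctx = uctx +
  fixes k :: nat and g :: "nat \<Rightarrow> pmat" and s :: nat
  assumes k1: "1 \<le> k" and gk: "\<forall>i<s. g i \<in> Gn k" and li: "lin_indep_mod p m G k g s"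
begin

abbreviation "G' \<equiv> topgen p m (g ` {..<s})"
abbreviation "Phi \<equiv> pstep p m G' G'"

definition SP :: "pmat set" where
  "SP = {x [^]\<^bsub>\<Gamma>\<^esub> p | x. x \<in> G'} \<union> {gcomm \<Gamma> x y | x y. x \<in> G' \<and> y \<in> G'}"

lemma Phi_eq: "Phi = topgen p m SP" by (simp add: pstep_def SP_def)

lemma g_Gk: "g ` {..<s} \<subseteq> Gn k" using gk by auto
lemma g_c: "g ` {..<s} \<subseteq> carrier \<Gamma>" using g_Gk Gn_carrier by blast
lemma G'cs: "closed_subgroup p m G'" by (rule topgen_cs[OF g_c])
lemma sG': "subgroup G' \<Gamma>" using G'cs by (simp add: closed_subgroup_def)
lemma G'_Gk: "G' \<subseteq> Gn k" by (rule topgen_min[OF Gn_cs g_Gk])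
lemma G'_G: "G' \<subseteq> G" using G'_Gk Gn_G by blast
lemma G'_c: "G' \<subseteq> carrier \<Gamma>" using G'_G Gc by blast

lemma SP_G': "SP \<subseteq> G'"
  unfolding SP_def using sub_pow[OF sG'] sub_comm[OF sG'] by blast

lemma SP_c: "SP \<subseteq> carrier \<Gamma>" using SP_G' G'_c by blast

lemma Phi_cs: "closed_subgroup p m Phi" unfolding Phi_eq by (rule topgen_cs[OF SP_c])
lemma Phi_G': "Phi \<subseteq> G'" unfolding Phi_eq by (rule topgen_min[OF G'cs SP_G'])

lemma Phi_nrm: assumes x: "x \<in> G'" and h: "h \<in> Phi" shows "x \<otimes>\<^bsub>\<Gamma>\<^esub> h \<otimes>\<^bsub>\<Gamma>\<^esub> inv\<^bsub>\<Gamma>\<^esub> x \<in> Phi"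
  unfolding Phi_eq
proof (rule topgen_normal[OF SP_c _ _ h[unfolded Phi_eq]])
  show xc: "x \<in> carrier \<Gamma>" using x G'_c by blast
  fix z assume "z \<in> SP"
  then consider y where "y \<in> G'" "z = y [^]\<^bsub>\<Gamma>\<^esub> p" | y w where "y \<in> G'" "w \<in> G'" "z = gcomm \<Gamma> y w"
    unfolding SP_def by blast
  then have "x \<otimes>\<^bsub>\<Gamma>\<^esub> z \<otimes>\<^bsub>\<Gamma>\<^esub> inv\<^bsub>\<Gamma>\<^esub> x \<in> SP"
  proof cases
    case 1
    have "x \<otimes>\<^bsub>\<Gamma>\<^esub> y \<otimes>\<^bsub>\<Gamma>\<^esub> inv\<^bsub>\<Gamma>\<^esub> x \<in> G'" by (rule sub_conj[OF sG' x 1(1)])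
    moreover have "x \<otimes>\<^bsub>\<Gamma>\<^esub> z \<otimes>\<^bsub>\<Gamma>\<^esub> inv\<^bsub>\<Gamma>\<^esub> x = (x \<otimes>\<^bsub>\<Gamma>\<^esub> y \<otimes>\<^bsub>\<Gamma>\<^esub> inv\<^bsub>\<Gamma>\<^esub> x) [^]\<^bsub>\<Gamma>\<^esub> p"
      using 1 conj_pow[OF xc, of y p] G'_c by auto
    ultimately show ?thesis unfolding SP_def by blast
  next
    case 2
    have "x \<otimes>\<^bsub>\<Gamma>\<^esub> y \<otimes>\<^bsub>\<Gamma>\<^esub> inv\<^bsub>\<Gamma>\<^esub> x \<in> G'" by (rule sub_conj[OF sG' x 2(1)])
    moreover have "x \<otimes>\<^bsub>\<Gamma>\<^esub> w \<otimes>\<^bsub>\<Gamma>\<^esub> inv\<^bsub>\<Gamma>\<^esub> x \<in> G'" by (rule sub_conj[OF sG' x 2(2)])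
    moreover have "x \<otimes>\<^bsub>\<Gamma>\<^esub> z \<otimes>\<^bsub>\<Gamma>\<^esub> inv\<^bsub>\<Gamma>\<^esub> x
        = gcomm \<Gamma> (x \<otimes>\<^bsub>\<Gamma>\<^esub> y \<otimes>\<^bsub>\<Gamma>\<^esub> inv\<^bsub>\<Gamma>\<^esub> x) (x \<otimes>\<^bsub>\<Gamma>\<^esub> w \<otimes>\<^bsub>\<Gamma>\<^esub> inv\<^bsub>\<Gamma>\<^esub> x)"
      using 2 conj_comm[OF xc, of y w] G'_c by auto
    ultimately show ?thesis unfolding SP_def by blast
  qed
  then show "x \<otimes>\<^bsub>\<Gamma>\<^esub> z \<otimes>\<^bsub>\<Gamma>\<^esub> inv\<^bsub>\<Gamma>\<^esub> x \<in> topgen p m SP" using topgen_sup by blast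
qed

lemma Phi_Gk1: "Phi \<subseteq> Gn (k+1)"
  unfolding Phi_eq
proof (rule topgen_min[OF Gn_cs])
  show "SP \<subseteq> Gn (k+1)"
  proof
    fix z assume "z \<in> SP"
    then consider y where "y \<in> G'" "z = y [^]\<^bsub>\<Gamma>\<^esub> p" | y w where "y \<in> G'" "w \<in> G'" "z = gcomm \<Gamma> y w"
      unfolding SP_def by blast
    then show "z \<in> Gn (k+1)"
    proof cases
      case 1 then show ?thesis using Gn_pow[OF k1] G'_Gk by blast
    next
      case 2 then show ?thesis using Gn_comm[OF k1] G'_Gk G'_G by blast
    qed
  qed
qed

lemma D_ctx: "dctx p m g s G' Phi"
proof (unfold_locales)
  show "g ` {..<s} \<subseteq> carrier \<Gamma>" by (rule g_c)
  show "G' = G'" ..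
  show "closed_subgroup p m Phi" by (rule Phi_cs)
  show "Phi \<subseteq> G'" by (rule Phi_G')
  show "\<And>x h. x \<in> G' \<Longrightarrow> h \<in> Phi \<Longrightarrow> x \<otimes>\<^bsub>\<Gamma>\<^esub> h \<otimes>\<^bsub>\<Gamma>\<^esub> inv\<^bsub>\<Gamma>\<^esub> x \<in> Phi" by (rule Phi_nrm)
  show "\<And>x. x \<in> G' \<Longrightarrow> x [^]\<^bsub>\<Gamma>\<^esub> p \<in> Phi"
    using topgen_sup[of SP] Phi_eq unfolding SP_def by blast
  show "\<And>x y. x \<in> G' \<Longrightarrow> y \<in> G' \<Longrightarrow> gcomm \<Gamma> x y \<in> Phi"
    using topgen_sup[of SP] Phi_eq unfolding SP_def by blast
qed

interpretation D: dctx p m g s G' Phi by (rule D_ctx)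

lemma li': assumes "\<forall>i<s. c i < p" "D.pc c \<in> Gn (k+1)" shows "\<forall>i<s. c i = 0"
  using li assms unfolding lin_indep_mod_def fprod_def by blast

lemma pc_zero: "\<forall>i<s. c i = 0 \<Longrightarrow> D.pc c = \<one>\<^bsub>\<Gamma>\<^esub>"
  by (intro grp.fprod_zero) (use g_c in auto)

lemma Gs2: "G' \<inter> Gn (k+1) = Phi"
proof
  show "Phi \<subseteq> G' \<inter> Gn (k+1)" using Phi_G' Phi_Gk1 by blast
  show "G' \<inter> Gn (k+1) \<subseteq> Phi"
  proof
    fix x assume x: "x \<in> G' \<inter> Gn (k+1)"
    obtain c where c: "c \<in> D.PE" "x \<in> Phi #>\<^bsub>\<Gamma>\<^esub> D.pc c" using D.decomp x by blast
    obtain h where h: "h \<in> Phi" "x = h \<otimes>\<^bsub>\<Gamma>\<^esub> D.pc c" using c(2) unfolding r_coset_def by blast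
    have hc: "h \<in> carrier \<Gamma>" "D.pc c \<in> carrier \<Gamma>" using h Phi_G' G'_c D.pcK by blast+
    have "D.pc c = inv\<^bsub>\<Gamma>\<^esub> h \<otimes>\<^bsub>\<Gamma>\<^esub> x" using h hc by (simp add: grp.m_assoc[symmetric])
    moreover have "inv\<^bsub>\<Gamma>\<^esub> h \<in> Gn (k+1)" using h Phi_Gk1 subgroup.m_inv_closed[OF Gn_sub] by blast
    ultimately have "D.pc c \<in> Gn (k+1)" using x subgroup.m_closed[OF Gn_sub] by simp
    moreover have "\<forall>i<s. c i < p" using c by (auto simp: D.PE_def)
    ultimately have "D.pc c = \<one>\<^bsub>\<Gamma>\<^esub>" using li' pc_zero by blast
    then show "x \<in> Phi" using h hc by simp
  qed
qed

lemma card_cosets: "card {Phi #>\<^bsub>\<Gamma>\<^esub> a | a. a \<in> G'} = p ^ s"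
proof -
  have eq: "{Phi #>\<^bsub>\<Gamma>\<^esub> a | a. a \<in> G'} = (\<lambda>c. Phi #>\<^bsub>\<Gamma>\<^esub> D.pc c) ` D.PE"
  proof
    show "{Phi #>\<^bsub>\<Gamma>\<^esub> a | a. a \<in> G'} \<subseteq> (\<lambda>c. Phi #>\<^bsub>\<Gamma>\<^esub> D.pc c) ` D.PE"
    proof
      fix C assume "C \<in> {Phi #>\<^bsub>\<Gamma>\<^esub> a | a. a \<in> G'}"
      then obtain a where a: "a \<in> G'" "C = Phi #>\<^bsub>\<Gamma>\<^esub> a" by blast
      obtain c where c: "c \<in> D.PE" "a \<in> Phi #>\<^bsub>\<Gamma>\<^esub> D.pc c" using D.decomp a by blast
      have "Phi #>\<^bsub>\<Gamma>\<^esub> D.pc c = Phi #>\<^bsub>\<Gamma>\<^esub> a"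
        by (rule grp.repr_independence[OF c(2) _ D.sH]) (use D.pcK G'_c in blast)
      then show "C \<in> (\<lambda>c. Phi #>\<^bsub>\<Gamma>\<^esub> D.pc c) ` D.PE" using a c by auto
    qed
    show "(\<lambda>c. Phi #>\<^bsub>\<Gamma>\<^esub> D.pc c) ` D.PE \<subseteq> {Phi #>\<^bsub>\<Gamma>\<^esub> a | a. a \<in> G'}"
      using D.pcK by blast
  qed
  have inj: "inj_on (\<lambda>c. Phi #>\<^bsub>\<Gamma>\<^esub> D.pc c) D.PE"
  proof (rule inj_onI)
    fix c d assume c: "c \<in> D.PE" and d: "d \<in> D.PE" and e: "Phi #>\<^bsub>\<Gamma>\<^esub> D.pc c = Phi #>\<^bsub>\<Gamma>\<^esub> D.pc d"
    let ?e = "restrict (\<lambda>i. (c i + (p - d i)) mod p) {..<s}"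
    have "D.pc ?e \<in> Gn (k+1)" using D.inj_aux[OF c d e] Phi_Gk1 by blast
    moreover have "\<forall>i<s. ?e i < p" using p2 by simp
    ultimately have z: "\<forall>i<s. ?e i = 0" using li' by blast
    show "c = d"
    proof (rule PiE_ext[OF c[unfolded D.PE_def] d[unfolded D.PE_def]])
      fix i assume i: "i \<in> {..<s}"
      have lt: "c i < p" "d i < p" using c d i by (auto simp: D.PE_def)
      have "(c i + (p - d i)) mod p = 0" using z i by auto
      then have "p dvd c i + (p - d i)" by (simp add: mod_eq_0_iff_dvd)
      moreover have "c i + (p - d i) < 2 * p" using lt by simp
      moreover have "0 < c i + (p - d i)" using lt by simp
      ultimately have "c i + (p - d i) = p"
      proof -
        assume dv: "p dvd c i + (p - d i)" and l2: "c i + (p - d i) < 2 * p" and l0: "0 < c i + (p - d i)"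
        obtain q where q: "c i + (p - d i) = p * q" using dv by (auto simp: dvd_def)
        have "q < 2" using l2 q p2 by (metis mult.commute mult_less_cancel2)
        moreover have "q \<noteq> 0" using l0 q by auto
        ultimately have "q = 1" by linarith
        then show ?thesis using q by simp
      qed
      then show "c i = d i" using lt by simp
    qed
  qed
  have "card (D.PE) = p ^ s" by (simp add: D.PE_def card_PiE)
  then show ?thesis unfolding eq using card_image[OF inj] by simp
qed

lemma dp: "d_p p m G' = s"
  unfolding d_p_def card_cosets
proof (rule the_equality)
  show "p ^ s = p ^ s" ..
  fix d assume "p ^ s = p ^ d"
  then show "d = s" using p2 power_inject_exp[of p d s] by simp
qed

end


context mctx begin

abbreviation "Gs n \<equiv> G' \<inter> Gn (n + k - 1)"

lemma sGs: "subgroup (Gs n) \<Gamma>" by (rule grp.subgroups_Inter_pair[OF sG' Gn_sub])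

lemma Gs_Suc: "Gs (n+1) = G' \<inter> Gn (n + k - 1 + 1)"
proof -
  have "n + 1 + k - 1 = n + k - 1 + 1" using k1 by simp
  then show ?thesis by simp
qed

lemma j1: "1 \<le> n \<Longrightarrow> 1 \<le> n + k - 1" using k1 by simp

lemma Gs_dec: "Gs (n+1) \<subseteq> Gs n" unfolding Gs_Suc using Gn_dec by auto

lemma nrm_Gs: "x \<in> G' \<Longrightarrow> h \<in> Gs n \<Longrightarrow> x \<otimes>\<^bsub>\<Gamma>\<^esub> h \<otimes>\<^bsub>\<Gamma>\<^esub> inv\<^bsub>\<Gamma>\<^esub> x \<in> Gs n"
  using sub_conj[OF sG'] Gn_normal G'_G by blast

lemma nrm_Gs2: "x \<in> Gs n \<Longrightarrow> h \<in> Gs n' \<Longrightarrow> x \<otimes>\<^bsub>\<Gamma>\<^esub> h \<otimes>\<^bsub>\<Gamma>\<^esub> inv\<^bsub>\<Gamma>\<^esub> x \<in> Gs n'"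
  using nrm_Gs[of x h n'] by blast

lemma L3: "Gs n \<lhd> \<Gamma>\<lparr>carrier := G'\<rparr>"
  by (rule quot_normal[OF sG' sGs _ nrm_Gs]) blast

lemma L4: "Gs (n+1) \<lhd> \<Gamma>\<lparr>carrier := Gs n\<rparr>"
  by (rule quot_normal[OF sGs sGs Gs_dec nrm_Gs2])

lemma cm_Gs: assumes n: "1 \<le> n" and x: "x \<in> Gs n" and y: "y \<in> Gs n" shows "gcomm \<Gamma> x y \<in> Gs (n+1)"
proof -
  have "gcomm \<Gamma> x y \<in> G'" using sub_comm[OF sG'] x y by blast
  moreover have "gcomm \<Gamma> x y \<in> Gn (n + k - 1 + 1)" using Gn_comm[OF j1[OF n]] x y G'_G by blast
  ultimately show ?thesis unfolding Gs_Suc by blast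
qed

lemma L5: "1 \<le> n \<Longrightarrow> comm_group (\<Gamma>\<lparr>carrier := Gs n\<rparr> Mod Gs (n+1))"
  by (rule quot_comm[OF sGs sGs Gs_dec nrm_Gs2 cm_Gs])

lemma pw_Gs: assumes n: "1 \<le> n" and x: "x \<in> Gs n" shows "x [^]\<^bsub>\<Gamma>\<^esub> p \<in> Gs (n+1)"
proof -
  have "x [^]\<^bsub>\<Gamma>\<^esub> p \<in> G'" using sub_pow[OF sG'] x by blast
  moreover have "x [^]\<^bsub>\<Gamma>\<^esub> p \<in> Gn (n + k - 1 + 1)" using Gn_pow[OF j1[OF n]] x by blast
  ultimately show ?thesis unfolding Gs_Suc by blast
qed

lemma L6: "1 \<le> n \<Longrightarrow> C \<in> carrier (\<Gamma>\<lparr>carrier := Gs n\<rparr> Mod Gs (n+1)) \<Longrightarrow>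
   C [^]\<^bsub>\<Gamma>\<lparr>carrier := Gs n\<rparr> Mod Gs (n+1)\<^esub> p = \<one>\<^bsub>\<Gamma>\<lparr>carrier := Gs n\<rparr> Mod Gs (n+1)\<^esub>"
  by (rule quot_pow[OF sGs sGs Gs_dec nrm_Gs2 pw_Gs])

lemma L7: assumes n: "1 \<le> n" and x: "x \<in> G'" and y: "y \<in> Gs n"
  shows "x \<otimes>\<^bsub>\<Gamma>\<^esub> y \<otimes>\<^bsub>\<Gamma>\<^esub> inv\<^bsub>\<Gamma>\<^esub> x \<otimes>\<^bsub>\<Gamma>\<^esub> inv\<^bsub>\<Gamma>\<^esub> y \<in> Gs (n+1)"
proof -
  have xc: "x \<in> carrier \<Gamma>" "y \<in> carrier \<Gamma>" using x y G'_c by auto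
  have e: "x \<otimes>\<^bsub>\<Gamma>\<^esub> y \<otimes>\<^bsub>\<Gamma>\<^esub> inv\<^bsub>\<Gamma>\<^esub> x \<otimes>\<^bsub>\<Gamma>\<^esub> inv\<^bsub>\<Gamma>\<^esub> y = gcomm \<Gamma> (inv\<^bsub>\<Gamma>\<^esub> x) (inv\<^bsub>\<Gamma>\<^esub> y)"
    using xc by (simp add: gcomm_def)
  have ix: "inv\<^bsub>\<Gamma>\<^esub> x \<in> G'" "inv\<^bsub>\<Gamma>\<^esub> y \<in> G'" using subgroup.m_inv_closed[OF sG'] x y by auto
  have iy: "inv\<^bsub>\<Gamma>\<^esub> y \<in> Gn (n + k - 1)" using subgroup.m_inv_closed[OF Gn_sub] y by blast
  have "gcomm \<Gamma> (inv\<^bsub>\<Gamma>\<^esub> x) (inv\<^bsub>\<Gamma>\<^esub> y) \<in> G'" by (rule sub_comm[OF sG' ix])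
  moreover have "gcomm \<Gamma> (inv\<^bsub>\<Gamma>\<^esub> x) (inv\<^bsub>\<Gamma>\<^esub> y) \<in> Gn (n + k - 1 + 1)"
    using Gn_comm[OF j1[OF n] _ iy] ix G'_G by blast
  ultimately show ?thesis unfolding e Gs_Suc by blast
qed

lemma L8: assumes n: "1 \<le> n" shows "popen_in p m G' (Gs n)"
  unfolding popen_in_def
proof (intro conjI ballI)
  show "Gs n \<subseteq> G'" by blast
  fix A assume A: "A \<in> Gs n"
  obtain N where N: "\<forall>B\<in>G. B N = A N \<longrightarrow> B \<in> Gn (n + k - 1)" using open_Gn[OF j1[OF n]] A by blast
  then show "\<exists>N. \<forall>B\<in>G'. B N = A N \<longrightarrow> B \<in> Gs n" using G'_G by blast
qed

lemma L9: "(\<Inter>n\<in>{1..}. Gs n) = {\<one>\<^bsub>\<Gamma>\<^esub>}"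
proof
  show "{\<one>\<^bsub>\<Gamma>\<^esub>} \<subseteq> (\<Inter>n\<in>{1..}. Gs n)" using subgroup.one_closed[OF sGs] by blast
  show "(\<Inter>n\<in>{1..}. Gs n) \<subseteq> {\<one>\<^bsub>\<Gamma>\<^esub>}"
  proof
    fix A assume A: "A \<in> (\<Inter>n\<in>{1..}. Gs n)"
    have "A \<in> Gn N" if "1 \<le> N" for N
    proof -
      have "A \<in> Gn (N + k - 1)" using A that by auto
      moreover have "N \<le> N + k - 1" using k1 by simp
      ultimately show ?thesis using Gn_anti by blast
    qed
    then show "A \<in> {\<one>\<^bsub>\<Gamma>\<^esub>}" using Gn_Cong_inter by blast
  qed
qed

end

theorem mainTheorem6:
  fixes p m k s :: nat and G :: "pmat set" and g :: "nat \<Rightarrow> pmat"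
  defines "\<Gamma> \<equiv> GL1 p m"
    and "G' \<equiv> topgen p m (g ` {..<s})"
    and "Gs \<equiv> (\<lambda>n. topgen p m (g ` {..<s}) \<inter> pseries p m G (n + k - 1))"
  assumes "Factorial_Ring.prime p" and "odd p"
    and "uniform p m G"
    and "k \<ge> 1"
    and "\<forall>i<s. g i \<in> pseries p m G k"
    and "lin_indep_mod p m G k g s"
  shows "d_p p m G' = s \<and> Gs 2 = pstep p m G' G' \<and>
    (\<forall>n\<ge>1. Gs n \<lhd> \<Gamma>\<lparr>carrier := G'\<rparr> \<and>
       Gs (n+1) \<lhd> \<Gamma>\<lparr>carrier := Gs n\<rparr> \<and>
       comm_group (\<Gamma>\<lparr>carrier := Gs n\<rparr> Mod Gs (n+1)) \<and>
       (\<forall>C\<in>carrier (\<Gamma>\<lparr>carrier := Gs n\<rparr> Mod Gs (n+1)).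
           C [^]\<^bsub>\<Gamma>\<lparr>carrier := Gs n\<rparr> Mod Gs (n+1)\<^esub> p = \<one>\<^bsub>\<Gamma>\<lparr>carrier := Gs n\<rparr> Mod Gs (n+1)\<^esub>) \<and>
       (\<forall>x\<in>G'. \<forall>y\<in>Gs n. x \<otimes>\<^bsub>\<Gamma>\<^esub> y \<otimes>\<^bsub>\<Gamma>\<^esub> inv\<^bsub>\<Gamma>\<^esub> x \<otimes>\<^bsub>\<Gamma>\<^esub> inv\<^bsub>\<Gamma>\<^esub> y \<in> Gs (n+1))) \<and>
    (\<forall>n\<ge>1. popen_in p m G' (Gs n)) \<and>
    (\<Inter>n\<in>{1..}. Gs n) = {\<one>\<^bsub>\<Gamma>\<^esub>}"
proof -
  have p2: "2 \<le> p" using assms(4) by (simp add: prime_ge_2_nat)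
  interpret P: pctx p m by unfold_locales (rule p2)
  have Gcs: "closed_subgroup p m G" using assms(6) by (simp add: uniform_def)
  interpret M: mctx p m G k g s
    by unfold_locales (use Gcs assms(6-9) in auto)
  have e2: "2 + k - 1 = k + 1" by simp
  show ?thesis
    unfolding \<Gamma>_def G'_def Gs_def
    using M.dp M.Gs2 M.L3 M.L4 M.L5 M.L6 M.L7 M.L8 M.L9 by (simp add: e2)
qed


end
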